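(* Let $p$ be prime and $H\le\mathrm{S}_n$ be in $\mathfrak{InP}(\mathrm{C}_p)$, with $B,K,\gamma$ as in the context, and let $H^\perp=\gamma^{-1}(\gamma(H)^\perp)$. Let $b\in B$ and $\kappa\in K$. Then $b\kappa\in N_{\mathrm{S}_n}(H)$ if and only if $b^{-1}\kappa\in N_{\mathrm{S}_n}(H^\perp)$.
   Context: $H\le\mathrm{S}_{n}$, $n=pk$, has orbits $\Omega_1,\dots,\Omega_k$ of size $p$ with each $G_i:=H|_{\Omega_i}$ cyclic of order $p$ (regarded as a subgroup of $\mathrm{S}_n$); $G=G_1\times\dots\times G_k$. For a bijection $\varphi:\Omega_1\to\Omega_j$ ($j\neq1$), $\overline\varphi$ is the involution in $\mathrm{Sym}(\Omega_1\cup\Omega_j)$ with $\alpha^{\overline\varphi}=\varphi(\alpha)$ for $\alpha\in\Omega_1$. For $2\le j\le k$, $\phi_j:\Omega_1\to\Omega_j$ witnesses a permutation isomorphism from $G_1$ to $G_j$. $B=\langle N_{\mathrm{Sym}(\Omega_i)}(G_i):1\le i\le k\rangle$, $K=\langle\overline{\phi_j}:2\le j\le k\rangle$. $g_1$ generates $G_1$, $g_j=g_1^{\overline{\phi_j}}$, and $\gamma:G\to\mathbb{F}_p^k$ is the isomorphism $\gamma(g_1^{r_1}\cdots g_k^{r_k})=(r_1,\dots,r_k)$ (elements of $\mathbb{F}_p$ identified with $0,\dots,p-1$). For a code $C\le\mathbb{F}_p^k$, $C^\perp=\{v: v\cdot c=0 \ \forall c\in C\}$ with the standard dot product. *)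

theory Defs
  imports "HOL-Computational_Algebra.Primes" "HOL-Algebra.Sym_Groups" "HOL-Algebra.Group_Action"
begin

(* Permutations of {1..n} are functions nat => nat (carrier of sym_group n).
   Every permutation of a subset A of {1..n} is regarded as an element of S_n
   fixing all points outside A. *)

definition restr :: "(nat \<Rightarrow> nat) \<Rightarrow> nat set \<Rightarrow> (nat \<Rightarrow> nat)" where
  "restr h A = (\<lambda>x. if x \<in> A then h x else x)"

definition restr_grp :: "(nat \<Rightarrow> nat) set \<Rightarrow> nat set \<Rightarrow> (nat \<Rightarrow> nat) set" where
  "restr_grp H A = (\<lambda>h. restr h A) ` H"

definition phibar :: "nat set \<Rightarrow> nat set \<Rightarrow> (nat \<Rightarrow> nat) \<Rightarrow> (nat \<Rightarrow> nat)" where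
  "phibar A B \<phi> = (\<lambda>x. if x \<in> A then \<phi> x else if x \<in> B then inv_into A \<phi> x else x)"

definition perm_iso_witness ::
  "(nat \<Rightarrow> nat) \<Rightarrow> nat set \<Rightarrow> nat set \<Rightarrow> (nat \<Rightarrow> nat) set \<Rightarrow> (nat \<Rightarrow> nat) set \<Rightarrow> bool" where
  "perm_iso_witness \<phi> A B G1 G2 \<longleftrightarrow>
     bij_betw \<phi> A B \<and>
     (\<exists>\<psi>. bij_betw \<psi> G1 G2 \<and> (\<forall>g\<in>G1. \<forall>h\<in>G1. \<psi> (g \<circ> h) = \<psi> g \<circ> \<psi> h) \<and>
          (\<forall>g\<in>G1. \<forall>x\<in>A. \<phi> (g x) = \<psi> g (\<phi> x)))"

(* the generators g_1, g_j = g_1^{\<overline>\<phi>_j} (conjugation, right-action convention) *)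
definition gens :: "nat set \<Rightarrow> (nat \<Rightarrow> nat set) \<Rightarrow> (nat \<Rightarrow> nat \<Rightarrow> nat) \<Rightarrow> (nat \<Rightarrow> nat) \<Rightarrow> nat \<Rightarrow> (nat \<Rightarrow> nat)" where
  "gens \<Omega>1 \<Omega> \<phi> g1 j = (if j = 1 then g1 else phibar \<Omega>1 (\<Omega> j) (\<phi> j) \<circ> g1 \<circ> phibar \<Omega>1 (\<Omega> j) (\<phi> j))"

(* vectors of F_p^k, entries identified with 0..p-1, indexed by 1..k *)
definition vecs :: "nat \<Rightarrow> nat \<Rightarrow> (nat \<Rightarrow> nat) set" where
  "vecs p k = {r. \<forall>i. (i \<in> {1..k} \<longrightarrow> r i < p) \<and> (i \<notin> {1..k} \<longrightarrow> r i = 0)}"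

definition elem :: "(nat \<Rightarrow> nat \<Rightarrow> nat) \<Rightarrow> nat \<Rightarrow> (nat \<Rightarrow> nat) \<Rightarrow> (nat \<Rightarrow> nat)" where
  "elem g k r = foldr (\<lambda>i f. (g i ^^ r i) \<circ> f) [1..<Suc k] id"

definition gamma :: "(nat \<Rightarrow> nat \<Rightarrow> nat) \<Rightarrow> nat \<Rightarrow> nat \<Rightarrow> (nat \<Rightarrow> nat) \<Rightarrow> (nat \<Rightarrow> nat)" where
  "gamma g p k x = (THE r. r \<in> vecs p k \<and> elem g k r = x)"

definition perp :: "nat \<Rightarrow> nat \<Rightarrow> (nat \<Rightarrow> nat) set \<Rightarrow> (nat \<Rightarrow> nat) set" where
  "perp p k C = {v \<in> vecs p k. \<forall>c\<in>C. (\<Sum>i=1..k. v i * c i) mod p = 0}"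

definition prod_grp :: "nat \<Rightarrow> nat \<Rightarrow> (nat \<Rightarrow> nat set) \<Rightarrow> (nat \<Rightarrow> (nat \<Rightarrow> nat) set) \<Rightarrow> (nat \<Rightarrow> nat) set" where
  "prod_grp n k \<Omega> Gs = {x \<in> carrier (sym_group n). \<forall>i\<in>{1..k}. restr x (\<Omega> i) \<in> Gs i}"

end

theory Submission
  imports Defs "HOL-Number_Theory.Cong" "HOL-Algebra.Multiplicative_Group"
begin

definition vadd :: "nat \<Rightarrow> (nat \<Rightarrow> nat) \<Rightarrow> (nat \<Rightarrow> nat) \<Rightarrow> (nat \<Rightarrow> nat)" where
  "vadd p u v = (\<lambda>i. (u i + v i) mod p)"
definition smul :: "nat \<Rightarrow> nat \<Rightarrow> (nat \<Rightarrow> nat) \<Rightarrow> (nat \<Rightarrow> nat)" where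
  "smul p t v = (\<lambda>i. (t * v i) mod p)"
definition dot :: "nat \<Rightarrow> nat \<Rightarrow> (nat \<Rightarrow> nat) \<Rightarrow> (nat \<Rightarrow> nat) \<Rightarrow> nat" where
  "dot p k u v = (\<Sum>i=1..k. u i * v i) mod p"
definition zv :: "nat \<Rightarrow> nat" where "zv = (\<lambda>i. 0)"
definition code :: "nat \<Rightarrow> nat \<Rightarrow> (nat \<Rightarrow> nat) set \<Rightarrow> bool" where
  "code p k C \<longleftrightarrow> C \<subseteq> vecs p k \<and> zv \<in> C \<and> (\<forall>u\<in>C. \<forall>v\<in>C. vadd p u v \<in> C)"

lemma perp_dot: "perp p k C = {v \<in> vecs p k. \<forall>c\<in>C. dot p k v c = 0}"
  by (simp add: perp_def dot_def)

lemma vecs_lt: "r \<in> vecs p k \<Longrightarrow> 0 < p \<Longrightarrow> r i < p"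
  unfolding vecs_def by (cases "i \<in> {1..k}") auto

lemma vecs_out: "r \<in> vecs p k \<Longrightarrow> i \<notin> {1..k} \<Longrightarrow> r i = 0"
  unfolding vecs_def by auto

lemma vecs_eqI: "r \<in> vecs p k \<Longrightarrow> s \<in> vecs p k \<Longrightarrow> (\<And>i. i \<in> {1..k} \<Longrightarrow> r i = s i) \<Longrightarrow> r = s"
  by (rule ext) (metis vecs_out)

lemma finite_vecs: "finite (vecs p k)"
proof -
  have "vecs p k \<subseteq> (\<lambda>f. \<lambda>i. if i \<in> {1..k} then f i else 0) ` ({1..k} \<rightarrow>\<^sub>E {0..<p})"
  proof
    fix r assume r: "r \<in> vecs p k"
    show "r \<in> (\<lambda>f. \<lambda>i. if i \<in> {1..k} then f i else 0) ` ({1..k} \<rightarrow>\<^sub>E {0..<p})"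
    proof (rule image_eqI[where x="restrict r {1..k}"])
      show "restrict r {1..k} \<in> {1..k} \<rightarrow>\<^sub>E {0..<p}" using r unfolding restrict_PiE_iff vecs_def by auto
      show "r = (\<lambda>i. if i \<in> {1..k} then restrict r {1..k} i else 0)" using r by (auto simp: vecs_def fun_eq_iff)
    qed
  qed
  then show ?thesis by (rule finite_subset) (intro finite_imageI finite_PiE; simp)
qed

lemma zv_vecs: "0 < p \<Longrightarrow> zv \<in> vecs p k" by (simp add: zv_def vecs_def)

lemma vadd_vecs: "u \<in> vecs p k \<Longrightarrow> v \<in> vecs p k \<Longrightarrow> 0 < p \<Longrightarrow> vadd p u v \<in> vecs p k"
  unfolding vecs_def vadd_def by auto

lemma smul_vecs: "v \<in> vecs p k \<Longrightarrow> 0 < p \<Longrightarrow> smul p t v \<in> vecs p k"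
  unfolding vecs_def smul_def by auto

lemma vadd_assoc: "vadd p (vadd p a b) c = vadd p a (vadd p b c)"
  unfolding vadd_def by (auto simp: mod_simps add.assoc)

lemma vadd_zv: assumes "u \<in> vecs p k" "0 < p" shows "vadd p u zv = u"
  unfolding vadd_def zv_def by (rule ext) (simp add: vecs_lt[OF assms])

lemma smul_add: "vadd p (smul p t x) (smul p s x) = smul p (t + s) x"
  unfolding vadd_def smul_def by (auto simp: mod_simps algebra_simps)

lemma smul_p: "p dvd t \<Longrightarrow> smul p t x = zv"
  unfolding smul_def zv_def by auto

lemma code_smul: "code p k S \<Longrightarrow> s \<in> S \<Longrightarrow> smul p t s \<in> S"
proof (induction t)
  case 0 then show ?case by (simp add: smul_def code_def zv_def[symmetric])
next
  case (Suc t)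
  have "smul p (Suc t) s = vadd p (smul p t s) s"
    unfolding smul_def vadd_def by (auto simp: mod_simps add.commute)
  then show ?case using Suc unfolding code_def by auto
qed

lemma mod_sum_cong: "(\<And>i. i \<in> A \<Longrightarrow> f i mod p = g i mod p) \<Longrightarrow> sum f A mod (p::nat) = sum g A mod p"
  by (metis (mono_tags, lifting) mod_sum_eq sum.cong)

lemma dot_comm: "dot p k u v = dot p k v u"
  unfolding dot_def by (simp add: mult.commute)

lemma dot_vadd: "dot p k w (vadd p a b) = (dot p k w a + dot p k w b) mod p"
proof -
  have "dot p k w (vadd p a b) = (\<Sum>i=1..k. w i * a i + w i * b i) mod p"
    unfolding dot_def vadd_def by (rule mod_sum_cong) (simp add: mod_simps algebra_simps)
  then show ?thesis unfolding dot_def by (simp add: sum.distrib mod_simps)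
qed

lemma dot_smul: "dot p k w (smul p t x) = (t * dot p k w x) mod p"
proof -
  have "dot p k w (smul p t x) = (\<Sum>i=1..k. t * (w i * x i)) mod p"
    unfolding dot_def smul_def by (rule mod_sum_cong) (simp add: mod_simps algebra_simps)
  then show ?thesis unfolding dot_def by (simp add: sum_distrib_left mod_simps)
qed

lemma dot_zv: "dot p k w zv = 0" by (simp add: dot_def zv_def)

lemma dot_lt: "0 < p \<Longrightarrow> dot p k u v < p" by (simp add: dot_def)

lemma kernel_card:
  assumes p: "prime p" and S: "code p k S" and s0: "s0 \<in> S" and a: "dot p k w s0 \<noteq> 0"
  shows "p * card {s \<in> S. dot p k w s = 0} = card S"
proof -
  let ?K = "{s \<in> S. dot p k w s = 0}"
  define f where "f = (\<lambda>(s,t). vadd p s (smul p t s0))"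
  have p0: "0 < p" using p prime_gt_0_nat by blast
  have SV: "S \<subseteq> vecs p k" using S by (simp add: code_def)
  have cop: "coprime (dot p k w s0) p"
  proof -
    have "\<not> p dvd dot p k w s0" using a dot_lt[OF p0] by (metis dvd_imp_le not_le neq0_conv)
    then show ?thesis using p by (simp add: prime_imp_coprime coprime_commute)
  qed
  have bij: "bij_betw f (?K \<times> {0..<p}) S"
  proof (rule bij_betwI')
    fix x y assume x: "x \<in> ?K \<times> {0..<p}" and y: "y \<in> ?K \<times> {0..<p}"
    obtain s1 t1 where x': "x = (s1,t1)" by force
    obtain s2 t2 where y': "y = (s2,t2)" by force
    show "(f x = f y) = (x = y)"
    proof
      assume eq: "f x = f y"
      have d: "dot p k w (f x) = (t1 * dot p k w s0) mod p" 
        using x unfolding x' f_def by (simp add: dot_vadd dot_smul)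
      have d2: "dot p k w (f y) = (t2 * dot p k w s0) mod p" 
        using y unfolding y' f_def by (simp add: dot_vadd dot_smul)
      have "[t1 * dot p k w s0 = t2 * dot p k w s0] (mod p)"
        using d d2 eq by (simp add: cong_def)
      then have "[t1 = t2] (mod p)" using cop cong_mult_rcancel_nat by blast
      then have t: "t1 = t2" using x y unfolding x' y' by (simp add: cong_def)
      have "\<And>i. (s1 i + smul p t1 s0 i) mod p = (s2 i + smul p t1 s0 i) mod p"
        using eq unfolding x' y' f_def t vadd_def by (simp add: fun_eq_iff)
      then have "\<And>i. s1 i = s2 i"
        using x y SV vecs_lt[OF _ p0] unfolding x' y'
        by (metis (no_types, lifting) SigmaE cong_add_rcancel_nat cong_def mem_Collect_eq mod_less old.prod.inject subsetD)
      then show "x = y" using t x' y' by auto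
    qed simp
  next
    fix x assume x: "x \<in> ?K \<times> {0..<p}"
    then show "f x \<in> S" unfolding f_def using S s0 code_smul[OF S s0]
      by (auto simp: code_def)
  next
    fix s assume s: "s \<in> S"
    let ?a = "dot p k w s0" let ?b = "dot p k w s"
    obtain ai where ai: "[?a * ai = 1] (mod p)" using cong_solve_coprime_nat[OF cop] by auto
    define t' where "t' = ((p - ?b) * ai) mod p"
    define s' where "s' = vadd p s (smul p t' s0)"
    define t where "t = (p - t') mod p"
    have s'S: "s' \<in> S" using S s code_smul[OF S s0] unfolding s'_def code_def by auto
    have c1: "[t' * ?a = (p - ?b) * (?a * ai)] (mod p)"
      unfolding t'_def cong_def by (metis mod_mult_left_eq mult.assoc mult.commute)
    have "[?b + t' * ?a = ?b + (p - ?b) * (?a * ai)] (mod p)"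
      by (rule cong_add[OF cong_refl c1])
    also have "[?b + (p - ?b) * (?a * ai) = ?b + (p - ?b) * 1] (mod p)"
      by (intro cong_add cong_mult ai cong_refl)
    also have "?b + (p - ?b) * 1 = p" using dot_lt[OF p0, of k w s] by simp
    finally have "(?b + t' * ?a) mod p = 0" by (simp add: cong_def)
    then have k: "dot p k w s' = 0" unfolding s'_def by (simp add: dot_vadd dot_smul mod_simps)
    have tt: "p dvd t' + t"
    proof (cases "t' = 0")
      case True then show ?thesis by (simp add: t_def)
    next
      case False
      have "t' < p" using p0 by (simp add: t'_def)
      then show ?thesis using False by (simp add: t_def)
    qed
    have "f (s', t) = vadd p s (vadd p (smul p t' s0) (smul p t s0))"
      by (simp add: f_def s'_def vadd_assoc)
    also have "\<dots> = s" using smul_add smul_p[OF tt] vadd_zv SV s p0 by auto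
    finally have "s = f (s', t)" by simp
    moreover have "(s', t) \<in> ?K \<times> {0..<p}" using s'S k p0 by (simp add: t_def)
    ultimately show "\<exists>x\<in>?K \<times> {0..<p}. s = f x" by blast
  qed
  have fin: "finite S" using SV finite_vecs finite_subset by blast
  show ?thesis using bij_betw_same_card[OF bij] by (simp add: card_cartesian_product mult.commute)
qed

lemma card_filter_sum: "finite A \<Longrightarrow> card {x\<in>A. P x} = (\<Sum>x\<in>A. if P x then 1 else (0::nat))"
  by (simp add: sum.If_cases Int_def conj_commute)

lemma code_vecs: "0 < p \<Longrightarrow> code p k (vecs p k)"
  by (simp add: code_def zv_vecs vadd_vecs)

lemma card_perp:
  assumes p: "prime p" and C: "code p k C"
  shows "card C * card (perp p k C) = card (vecs p k)"
proof -
  let ?V = "vecs p k" let ?P = "perp p k C"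
  have p1: "1 < p" using prime_gt_1_nat[OF p] by auto
  then have p0: "0 < p" by simp
  have finV: "finite ?V" by (rule finite_vecs)
  have CV: "C \<subseteq> ?V" using C by (simp add: code_def)
  have finC: "finite C" using CV finV finite_subset by blast
  have PV: "?P \<subseteq> ?V" by (auto simp: perp_def)
  have finP: "finite ?P" using PV finV finite_subset by blast
  have zC: "zv \<in> C" using C by (simp add: code_def)
  have swap: "(\<Sum>c\<in>C. card {v\<in>?V. dot p k v c = 0}) = (\<Sum>v\<in>?V. card {c\<in>C. dot p k v c = 0})"
    unfolding card_filter_sum[OF finV] card_filter_sum[OF finC] by (rule sum.swap)
  have L: "p * (\<Sum>c\<in>C. card {v\<in>?V. dot p k v c = 0}) = p * card ?V + (card C - 1) * card ?V"
  proof -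
    have "(\<Sum>c\<in>C. card {v\<in>?V. dot p k v c = 0}) = card {v\<in>?V. dot p k v zv = 0} + (\<Sum>c\<in>C - {zv}. card {v\<in>?V. dot p k v c = 0})"
      using zC finC by (simp add: sum.remove)
    moreover have "card {v\<in>?V. dot p k v zv = 0} = card ?V" by (simp add: dot_zv)
    moreover have "p * (\<Sum>c\<in>C - {zv}. card {v\<in>?V. dot p k v c = 0}) = (\<Sum>c\<in>C - {zv}. card ?V)"
      unfolding sum_distrib_left
    proof (rule sum.cong[OF refl])
      fix c assume c: "c \<in> C - {zv}"
      then have cV: "c \<in> ?V" using CV by auto
      have "\<exists>i. c i \<noteq> 0" using c by (auto simp: zv_def fun_eq_iff)
      then obtain i where i1: "c i \<noteq> 0" by blast
      have "i \<in> {1..k}" using vecs_out[OF cV, of i] i1 by blast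
      note i = this i1
      define e where "e = (\<lambda>j. if j = i then 1 else (0::nat))"
      have eV: "e \<in> ?V" unfolding vecs_def mem_Collect_eq
      proof (intro allI conjI impI)
        fix j
        show "j \<in> {1..k} \<Longrightarrow> e j < p" using p1 by (simp add: e_def)
        show "j \<notin> {1..k} \<Longrightarrow> e j = 0" using i by (auto simp: e_def)
      qed
      have "dot p k c e = c i mod p" unfolding dot_def e_def using i
        by (simp add: if_distrib[of "\<lambda>x. _ * x"] sum.delta cong: if_cong)
      then have "dot p k c e \<noteq> 0" using i vecs_lt[OF cV p0, of i] by simp
      then have "p * card {v\<in>?V. dot p k c v = 0} = card ?V"
        by (rule kernel_card[OF p code_vecs[OF p0] eV])
      moreover have "{v\<in>?V. dot p k v c = 0} = {v\<in>?V. dot p k c v = 0}"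
        by (rule Collect_cong) (metis dot_comm)
      ultimately show "p * card {v\<in>?V. dot p k v c = 0} = card ?V" by simp
    qed
    ultimately show ?thesis using zC finC by (simp add: distrib_left card_Diff_singleton)
  qed
  have R: "p * (\<Sum>v\<in>?V. card {c\<in>C. dot p k v c = 0}) = p * card ?P * card C + (card ?V - card ?P) * card C"
  proof -
    have "(\<Sum>v\<in>?V. card {c\<in>C. dot p k v c = 0}) = (\<Sum>v\<in>?P. card {c\<in>C. dot p k v c = 0}) + (\<Sum>v\<in>?V - ?P. card {c\<in>C. dot p k v c = 0})"
      using sum.subset_diff[OF PV finV] by (simp add: add.commute)
    moreover have "(\<Sum>v\<in>?P. card {c\<in>C. dot p k v c = 0}) = (\<Sum>v\<in>?P. card C)"
    proof (rule sum.cong[OF refl])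
      fix v assume "v \<in> ?P"
      then have "{c\<in>C. dot p k v c = 0} = C" by (auto simp: perp_dot)
      then show "card {c\<in>C. dot p k v c = 0} = card C" by simp
    qed
    moreover have "p * (\<Sum>v\<in>?V - ?P. card {c\<in>C. dot p k v c = 0}) = (\<Sum>v\<in>?V - ?P. card C)"
      unfolding sum_distrib_left
    proof (rule sum.cong[OF refl])
      fix v assume v: "v \<in> ?V - ?P"
      then obtain c0 where c0: "c0 \<in> C" "dot p k v c0 \<noteq> 0" by (auto simp: perp_dot)
      show "p * card {c\<in>C. dot p k v c = 0} = card C" by (rule kernel_card[OF p C c0])
    qed
    ultimately show ?thesis by (simp add: distrib_left card_Diff_subset[OF finP PV] mult.assoc)
  qed
  have PleV: "card ?P \<le> card ?V" using PV finV card_mono by blast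
  have C1: "1 \<le> card C" using zC finC by (simp add: Suc_le_eq card_gt_0_iff) blast
  have eq: "p * card ?V + (card C - 1) * card ?V = p * card ?P * card C + (card ?V - card ?P) * card C"
    by (simp only: L[symmetric] R[symmetric] swap)
  then have "int (p * card ?V + (card C - 1) * card ?V) = int (p * card ?P * card C + (card ?V - card ?P) * card C)"
    by simp
  then have eqi: "int p * int (card ?V) + (int (card C) - 1) * int (card ?V) = int p * int (card ?P) * int (card C) + (int (card ?V) - int (card ?P)) * int (card C)"
    using PleV C1 by (simp add: of_nat_diff)
  have "(int p - 1) * (int (card ?V) - int (card ?P) * int (card C)) =
        (int p * int (card ?V) + (int (card C) - 1) * int (card ?V)) - (int p * int (card ?P) * int (card C) + (int (card ?V) - int (card ?P)) * int (card C))"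
    by (simp add: algebra_simps)
  then have "(int p - 1) * (int (card ?V) - int (card ?P) * int (card C)) = 0" using eqi by simp
  then have "int (card ?V) = int (card ?P) * int (card C)" using p1 by simp
  then show ?thesis by (simp add: mult.commute of_nat_mult[symmetric] del: of_nat_mult)
qed

lemma code_perp:
  assumes "0 < p" shows "code p k (perp p k C)"
  unfolding code_def
proof (intro conjI ballI)
  show "perp p k C \<subseteq> vecs p k" by (auto simp: perp_def)
  show "zv \<in> perp p k C" using assms by (simp add: perp_dot zv_vecs dot_comm[of _ _ zv] dot_zv)
  fix u v assume "u \<in> perp p k C" "v \<in> perp p k C"
  then show "vadd p u v \<in> perp p k C" using assms
    apply (auto simp: perp_dot vadd_vecs)
    by (metis dot_comm dot_vadd add_0 mod_0)
qed

lemma double_perp: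
  assumes p: "prime p" and C: "code p k C"
  shows "perp p k (perp p k C) = C"
proof -
  have p0: "0 < p" using p prime_gt_0_nat by blast
  have CV: "C \<subseteq> vecs p k" using C by (simp add: code_def)
  have sub: "C \<subseteq> perp p k (perp p k C)"
    using CV by (auto simp: perp_dot) (metis dot_comm)
  have c1: "card C * card (perp p k C) = card (vecs p k)" by (rule card_perp[OF p C])
  have c2: "card (perp p k C) * card (perp p k (perp p k C)) = card (vecs p k)"
    by (rule card_perp[OF p code_perp[OF p0]])
  have "zv \<in> perp p k C" using code_perp[OF p0] by (simp add: code_def)
  moreover have "finite (perp p k C)" using finite_vecs by (rule finite_subset[rotated]) (auto simp: perp_def)
  ultimately have "card (perp p k C) > 0" by (auto simp: card_gt_0_iff)
  moreover have "card (perp p k C) * card (perp p k (perp p k C)) = card (perp p k C) * card C"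
    using c1 c2 by (simp add: mult.commute)
  ultimately have "card (perp p k (perp p k C)) = card C" by simp
  moreover have "finite (perp p k (perp p k C))" using finite_vecs by (rule finite_subset[rotated]) (auto simp: perp_def)
  ultimately show ?thesis using sub by (metis card_subset_eq)
qed

lemma adj_perp:
  assumes p: "prime p" and C: "code p k C"
    and M: "bij_betw M (vecs p k) (vecs p k)" and M': "bij_betw M' (vecs p k) (vecs p k)"
    and adj: "\<And>u v. u \<in> vecs p k \<Longrightarrow> v \<in> vecs p k \<Longrightarrow> dot p k (M' u) (M v) = dot p k u v"
    and add: "\<And>u v. u \<in> vecs p k \<Longrightarrow> v \<in> vecs p k \<Longrightarrow> M (vadd p u v) = vadd p (M u) (M v)"
    and z: "M zv = zv"
  shows "M ` C = C \<longleftrightarrow> M' ` perp p k C = perp p k C"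
proof -
  have p0: "0 < p" using p prime_gt_0_nat by blast
  have CV: "C \<subseteq> vecs p k" using C by (simp add: code_def)
  have MV: "M x \<in> vecs p k" if "x \<in> vecs p k" for x using M that by (rule bij_betw_apply)
  have M'V: "M' x \<in> vecs p k" if "x \<in> vecs p k" for x using M' that by (rule bij_betw_apply)
  have key: "M' ` perp p k D = perp p k (M ` D)" if D: "D \<subseteq> vecs p k" for D
  proof
    show "M' ` perp p k D \<subseteq> perp p k (M ` D)"
    proof
      fix x assume "x \<in> M' ` perp p k D"
      then obtain u where u: "u \<in> perp p k D" "x = M' u" by blast
      have uV: "u \<in> vecs p k" using u by (simp add: perp_def)
      have "\<forall>c\<in>M ` D. dot p k x c = 0"
      proof
        fix c assume "c \<in> M ` D"
        then obtain d where d: "d \<in> D" "c = M d" by blast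
        have "dot p k x c = dot p k u d" using adj[OF uV, of d] d D u by auto
        also have "\<dots> = 0" using u d by (simp add: perp_dot)
        finally show "dot p k x c = 0" .
      qed
      then show "x \<in> perp p k (M ` D)" using M'V[OF uV] u by (simp add: perp_dot)
    qed
    show "perp p k (M ` D) \<subseteq> M' ` perp p k D"
    proof
      fix w assume w: "w \<in> perp p k (M ` D)"
      then have wV: "w \<in> vecs p k" by (simp add: perp_def)
      have "M' ` vecs p k = vecs p k" using M' by (rule bij_betw_imp_surj_on)
      then obtain u where u: "u \<in> vecs p k" "w = M' u" using wV by blast
      have "\<forall>d\<in>D. dot p k u d = 0"
      proof
        fix d assume d: "d \<in> D"
        have "dot p k u d = dot p k w (M d)" using adj[OF u(1), of d] d D u by auto
        also have "\<dots> = 0" using w d by (simp add: perp_dot)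
        finally show "dot p k u d = 0" .
      qed
      then have "u \<in> perp p k D" using u by (simp add: perp_dot)
      then show "w \<in> M' ` perp p k D" using u by blast
    qed
  qed
  have codeM: "code p k (M ` C)" unfolding code_def
  proof (intro conjI ballI)
    show "M ` C \<subseteq> vecs p k" using CV MV by auto
    show "zv \<in> M ` C" using C z unfolding code_def by (metis image_eqI)
    fix x y assume "x \<in> M ` C" "y \<in> M ` C"
    then obtain u v where uv: "u \<in> C" "v \<in> C" "x = M u" "y = M v" by blast
    have "u \<in> vecs p k" "v \<in> vecs p k" using uv CV by auto
    then have "vadd p x y = M (vadd p u v)" using add[of u v] uv by simp
    moreover have "vadd p u v \<in> C" using C uv unfolding code_def by blast
    ultimately show "vadd p x y \<in> M ` C" by blast
  qed
  show ?thesis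
  proof
    assume "M ` C = C" then show "M' ` perp p k C = perp p k C" using key[OF CV] by simp
  next
    assume "M' ` perp p k C = perp p k C"
    then have "perp p k (M ` C) = perp p k C" using key[OF CV] by simp
    then have "perp p k (perp p k (M ` C)) = perp p k (perp p k C)" by simp
    then show "M ` C = C" using double_perp[OF p C] double_perp[OF p codeM] by simp
  qed
qed


declare One_nat_def[simp del]

lemma funpow_mod_id: "(f::'a\<Rightarrow>'a) ^^ p = id \<Longrightarrow> f ^^ m = f ^^ (m mod p)"
proof -
  assume f: "f ^^ p = id"
  have pw: "f ^^ (p * q) = id" for q by (induction q) (simp_all add: funpow_add f)
  have "f ^^ m = f ^^ (p * (m div p) + m mod p)" by simp
  also have "\<dots> = f ^^ (m mod p)" by (simp only: funpow_add pw) simp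
  finally show ?thesis .
qed

lemma permutes_funpow: "f permutes S \<Longrightarrow> f ^^ t permutes S"
  by (induction t) (simp_all add: permutes_id permutes_compose)

lemma conj_funpow: "bij s \<Longrightarrow> s \<circ> f ^^ t \<circ> inv' s = (s \<circ> f \<circ> inv' s) ^^ t"
proof (induction t)
  case 0 then show ?case using surj_f_inv_f[OF bij_is_surj[OF 0]] by (simp add: fun_eq_iff)
next
  case (Suc t)
  have "s \<circ> f ^^ Suc t \<circ> inv' s = (s \<circ> f \<circ> inv' s) \<circ> (s \<circ> f ^^ t \<circ> inv' s)"
    using Suc.prems by (simp add: fun_eq_iff bij_is_inj inv_f_f)
  also have "\<dots> = (s \<circ> f \<circ> inv' s) \<circ> (s \<circ> f \<circ> inv' s) ^^ t" using Suc.IH[OF Suc.prems] by (rule arg_cong)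
  also have "\<dots> = (s \<circ> f \<circ> inv' s) ^^ Suc t" by (rule funpow.simps(2)[symmetric])
  finally show ?case .
qed

lemma sym_pow: "x [^]\<^bsub>sym_group n\<^esub> (m::nat) = x ^^ m"
  by (induction m) (simp_all add: sym_group_def funpow_Suc_right del: funpow.simps)

lemma sym_inv: "x \<in> carrier (sym_group n) \<Longrightarrow> inv\<^bsub>sym_group n\<^esub> x = inv' x"
  by simp

lemma sym_mult: "x \<otimes>\<^bsub>sym_group n\<^esub> y = x \<circ> y"
  by (simp add: sym_group_def)

lemma normalizer_sym:
  assumes "S \<subseteq> carrier (sym_group n)"
  shows "s \<in> normalizer (sym_group n) S \<longleftrightarrow> s permutes {1..n} \<and> (\<lambda>h. s \<circ> h \<circ> inv' s) ` S = S"
proof -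
  have "s <#\<^bsub>sym_group n\<^esub> S #>\<^bsub>sym_group n\<^esub> inv' s = (\<lambda>h. s \<circ> h \<circ> inv' s) ` S"
    by (auto simp: l_coset_def r_coset_def sym_group_def)
  then show ?thesis using assms
    by (auto simp: normalizer_def stabilizer_def sym_group_carrier)
qed

lemma foldr_comp_Cons: "foldr (\<lambda>i f. G i \<circ> f) (j#L) id x = G j (foldr (\<lambda>i f. G i \<circ> f) L id x)"
  by simp

lemma foldr_comp_Cons': "foldr (\<lambda>i f. G i \<circ> f) (j#L) id = G j \<circ> foldr (\<lambda>i f. G i \<circ> f) L id"
  by simp

lemma foldr_comp_Nil: "foldr (\<lambda>i f. G i \<circ> f) [] id = id"
  by simp

definition Mv :: "nat \<Rightarrow> nat \<Rightarrow> (nat \<Rightarrow> nat) \<Rightarrow> (nat \<Rightarrow> nat) \<Rightarrow> (nat \<Rightarrow> nat) \<Rightarrow> (nat \<Rightarrow> nat)" where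
  "Mv p k \<pi> a r = (\<lambda>j. if j \<in> {1..k} then (a (inv' \<pi> j) * r (inv' \<pi> j)) mod p else 0)"

lemma conj_comp: "bij s \<Longrightarrow> bij t \<Longrightarrow> (s \<circ> t) \<circ> f \<circ> inv' (s \<circ> t) = s \<circ> (t \<circ> f \<circ> inv' t) \<circ> inv' s"
  by (simp add: o_inv_distrib comp_assoc)

lemma Mv_pi: "\<pi> permutes {1..k} \<Longrightarrow> i \<in> {1..k} \<Longrightarrow> Mv p k \<pi> a r (\<pi> i) = (a i * r i) mod p"
proof -
  assume \<pi>: "\<pi> permutes {1..k}" and i: "i \<in> {1..k}"
  have "\<pi> i \<in> {1..k}" using permutes_in_image[OF \<pi>] i by blast
  then show ?thesis unfolding Mv_def by (simp add: permutes_inverses[OF \<pi>])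
qed

lemma Mv_V: "0 < p \<Longrightarrow> Mv p k \<pi> a r \<in> vecs p k"
  unfolding Mv_def vecs_def by auto

lemma Mv_add: "Mv p k \<pi> a (vadd p u v) = vadd p (Mv p k \<pi> a u) (Mv p k \<pi> a v)"
proof
  fix j
  have "(x * ((y + z) mod p)) mod p = ((x * y) mod p + (x * z) mod p) mod p" for x y z :: nat
    by (metis distrib_left mod_add_eq mod_mult_right_eq)
  then show "Mv p k \<pi> a (vadd p u v) j = vadd p (Mv p k \<pi> a u) (Mv p k \<pi> a v) j"
    unfolding Mv_def vadd_def by simp
qed

lemma Mv_zv: "Mv p k \<pi> a zv = zv"
  unfolding Mv_def zv_def by (auto simp: fun_eq_iff)

lemma Mv_inj:
  assumes p: "0 < p" and \<pi>: "\<pi> permutes {1..k}" and cop: "\<forall>i\<in>{1..k}. coprime (a i) p"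
  shows "inj_on (Mv p k \<pi> a) (vecs p k)"
proof
  fix u v assume u: "u \<in> vecs p k" and v: "v \<in> vecs p k" and e: "Mv p k \<pi> a u = Mv p k \<pi> a v"
  show "u = v"
  proof (rule vecs_eqI[OF u v])
    fix i assume i: "i \<in> {1..k}"
    have "(a i * u i) mod p = Mv p k \<pi> a u (\<pi> i)" by (rule Mv_pi[OF \<pi> i, symmetric])
    also have "\<dots> = Mv p k \<pi> a v (\<pi> i)" using e by simp
    also have "\<dots> = (a i * v i) mod p" by (rule Mv_pi[OF \<pi> i])
    finally have "[a i * u i = a i * v i] (mod p)" unfolding cong_def .
    then have "[u i = v i] (mod p)" using cong_mult_lcancel_nat[of "a i" p "u i" "v i"] cop i by blast
    then show "u i = v i" using vecs_lt[OF u p] vecs_lt[OF v p] by (simp add: cong_def)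
  qed
qed

lemma Mv_bij:
  assumes p: "0 < p" and \<pi>: "\<pi> permutes {1..k}" and cop: "\<forall>i\<in>{1..k}. coprime (a i) p"
  shows "bij_betw (Mv p k \<pi> a) (vecs p k) (vecs p k)"
  unfolding bij_betw_def
proof
  show inj: "inj_on (Mv p k \<pi> a) (vecs p k)" by (rule Mv_inj[OF assms])
  show "Mv p k \<pi> a ` vecs p k = vecs p k"
    by (rule endo_inj_surj[OF finite_vecs _ inj]) (use Mv_V[OF p] in blast)
qed

lemma Mv_adj:
  assumes \<pi>: "\<pi> permutes {1..k}" and inv: "\<forall>i\<in>{1..k}. [a' i * a i = 1] (mod p)"
  shows "dot p k (Mv p k \<pi> a' u) (Mv p k \<pi> a v) = dot p k u v"
proof -
  define f where "f = (\<lambda>j. Mv p k \<pi> a' u j * Mv p k \<pi> a v j)"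
  have "(\<Sum>j=1..k. Mv p k \<pi> a' u j * Mv p k \<pi> a v j) = sum f {1..k}" by (simp add: f_def)
  also have "\<dots> = sum (f \<circ> \<pi>) {1..k}" by (rule sum.permute[OF \<pi>])
  also have "\<dots> = (\<Sum>i=1..k. ((a' i * u i) mod p) * ((a i * v i) mod p))"
    by (rule sum.cong[OF refl]) (simp only: f_def comp_apply Mv_pi[OF \<pi>])
  finally have s: "(\<Sum>j=1..k. Mv p k \<pi> a' u j * Mv p k \<pi> a v j) = (\<Sum>i=1..k. ((a' i * u i) mod p) * ((a i * v i) mod p))" .
  have "(\<Sum>i=1..k. ((a' i * u i) mod p) * ((a i * v i) mod p)) mod p = (\<Sum>i=1..k. u i * v i) mod p"
  proof (rule mod_sum_cong)
    fix i assume i: "i \<in> {1..k}"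
    have "[((a' i * u i) mod p) * ((a i * v i) mod p) = (a' i * a i) * (u i * v i)] (mod p)"
    proof -
      have "((a' i * u i) mod p * ((a i * v i) mod p)) mod p = ((a' i * u i) * (a i * v i)) mod p"
        by (rule mod_mult_eq)
      moreover have "(a' i * u i) * (a i * v i) = (a' i * a i) * (u i * v i)"
        by (simp add: mult.assoc mult.left_commute)
      ultimately show ?thesis unfolding cong_def by simp
    qed
    also have "[(a' i * a i) * (u i * v i) = 1 * (u i * v i)] (mod p)"
      by (rule cong_mult[OF _ cong_refl]) (use inv i in blast)
    finally show "((a' i * u i) mod p) * ((a i * v i) mod p) mod p = u i * v i mod p"
      by (simp add: cong_def)
  qed
  then show ?thesis unfolding dot_def s .
qed

locale S =
  fixes p n k :: nat and H :: "(nat \<Rightarrow> nat) set" and \<Omega> :: "nat \<Rightarrow> nat set"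
    and \<phi> :: "nat \<Rightarrow> nat \<Rightarrow> nat" and g1 :: "nat \<Rightarrow> nat"
  assumes prime: "prime p"
    and subgrp: "subgroup H (sym_group n)"
    and nk: "n = p * k"
    and card_Om: "\<And>i. i \<in> {1..k} \<Longrightarrow> card (\<Omega> i) = p"
    and disj: "\<And>i j. i \<in> {1..k} \<Longrightarrow> j \<in> {1..k} \<Longrightarrow> i \<noteq> j \<Longrightarrow> \<Omega> i \<inter> \<Omega> j = {}"
    and union: "(\<Union>i\<in>{1..k}. \<Omega> i) = {1..n}"
    and orbit: "\<And>i x. i \<in> {1..k} \<Longrightarrow> x \<in> \<Omega> i \<Longrightarrow> (\<lambda>h. h x) ` H = \<Omega> i"
    and Gcard: "\<And>i. i \<in> {1..k} \<Longrightarrow> card (restr_grp H (\<Omega> i)) = p \<and>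
              (\<exists>c. restr_grp H (\<Omega> i) = generate (sym_group n) {c})"
    and G1gen: "restr_grp H (\<Omega> 1) = generate (sym_group n) {g1}"
    and iso: "\<And>j. j \<in> {2..k} \<Longrightarrow>
           perm_iso_witness (\<phi> j) (\<Omega> 1) (\<Omega> j) (restr_grp H (\<Omega> 1)) (restr_grp H (\<Omega> j))"
begin

abbreviation "g \<equiv> gens (\<Omega> 1) \<Omega> \<phi> g1"
abbreviation "Gi i \<equiv> restr_grp H (\<Omega> i)"
abbreviation "SG \<equiv> sym_group n"
abbreviation "P j \<equiv> phibar (\<Omega> 1) (\<Omega> j) (\<phi> j)"

lemma p1: "1 < p" using prime prime_gt_1_nat by blast
lemma p0: "0 < p" using p1 by simp

lemma Om_sub: "i \<in> {1..k} \<Longrightarrow> \<Omega> i \<subseteq> {1..n}"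
  using union by blast

lemma Om_fin: "i \<in> {1..k} \<Longrightarrow> finite (\<Omega> i)"
  using Om_sub finite_subset by blast

lemma Om_ne: "i \<in> {1..k} \<Longrightarrow> \<Omega> i \<noteq> {}"
  using card_Om p0 by fastforce

lemma Om_disj: "i \<in> {1..k} \<Longrightarrow> j \<in> {1..k} \<Longrightarrow> x \<in> \<Omega> i \<Longrightarrow> x \<in> \<Omega> j \<Longrightarrow> i = j"
  using disj by blast

lemma H_perm: "h \<in> H \<Longrightarrow> h permutes {1..n}"
  using subgroup.subset[OF subgrp] by (auto simp: sym_group_carrier)

lemma H_maps: "h \<in> H \<Longrightarrow> i \<in> {1..k} \<Longrightarrow> x \<in> \<Omega> i \<Longrightarrow> h x \<in> \<Omega> i"
  using orbit by blast

lemma H_id: "id \<in> H"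
  using subgroup.one_closed[OF subgrp] by (simp add: sym_group_def)

lemma H_comp: "h \<in> H \<Longrightarrow> h' \<in> H \<Longrightarrow> h \<circ> h' \<in> H"
  using subgroup.m_closed[OF subgrp] by (simp add: sym_group_def)

lemma restr_permutes: "h \<in> H \<Longrightarrow> i \<in> {1..k} \<Longrightarrow> restr h (\<Omega> i) permutes \<Omega> i"
proof (rule inj_imp_permutes)
  assume h: "h \<in> H" and i: "i \<in> {1..k}"
  show "inj_on (restr h (\<Omega> i)) (\<Omega> i)"
    using permutes_inj[OF H_perm[OF h]] by (auto simp: restr_def inj_on_def inj_def)
  show "finite (\<Omega> i)" by (rule Om_fin[OF i])
  show "restr h (\<Omega> i) x \<in> \<Omega> i" if "x \<in> \<Omega> i" for x using H_maps[OF h i that] that by (simp add: restr_def)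
  show "restr h (\<Omega> i) x = x" if "x \<notin> \<Omega> i" for x using that by (simp add: restr_def)
qed

lemma Gi_perm: "x \<in> Gi i \<Longrightarrow> i \<in> {1..k} \<Longrightarrow> x permutes \<Omega> i"
  using restr_permutes by (auto simp: restr_grp_def)

lemma Gi_permn: "x \<in> Gi i \<Longrightarrow> i \<in> {1..k} \<Longrightarrow> x permutes {1..n}"
  using Gi_perm Om_sub permutes_subset by blast

lemma Gi_carrier: "i \<in> {1..k} \<Longrightarrow> Gi i \<subseteq> carrier SG"
  using Gi_permn by (auto simp: sym_group_carrier)

lemma restr_comp: "h \<in> H \<Longrightarrow> h' \<in> H \<Longrightarrow> i \<in> {1..k} \<Longrightarrow> restr (h \<circ> h') (\<Omega> i) = restr h (\<Omega> i) \<circ> restr h' (\<Omega> i)"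
  using H_maps by (auto simp: restr_def fun_eq_iff)

lemma Gi_comp: "x \<in> Gi i \<Longrightarrow> y \<in> Gi i \<Longrightarrow> i \<in> {1..k} \<Longrightarrow> x \<circ> y \<in> Gi i"
proof -
  assume a: "x \<in> Gi i" "y \<in> Gi i" "i \<in> {1..k}"
  then obtain h h' where h: "h \<in> H" "h' \<in> H" "x = restr h (\<Omega> i)" "y = restr h' (\<Omega> i)"
    unfolding restr_grp_def by blast
  then have "x \<circ> y = restr (h \<circ> h') (\<Omega> i)" using restr_comp a(3) by simp
  then show ?thesis using H_comp[OF h(1,2)] unfolding restr_grp_def by blast
qed

lemma Gi_id: "id \<in> Gi i"
proof -
  have "restr id (\<Omega> i) = id" by (simp add: restr_def fun_eq_iff)
  then show ?thesis using H_id unfolding restr_grp_def by (metis image_eqI)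
qed

lemma Gi_pow_closed: "x \<in> Gi i \<Longrightarrow> i \<in> {1..k} \<Longrightarrow> x ^^ t \<in> Gi i"
  by (induction t) (simp_all add: Gi_id Gi_comp)

lemma fin_SG: "finite (carrier SG)"
  unfolding sym_group_def by (simp add: finite_permutations)

lemma g1_in: "g1 \<in> Gi 1"
  unfolding G1gen by (rule generate.incl) simp

context
  assumes k1: "1 \<le> k"
begin

lemma one_in: "1 \<in> {1..k}" using k1 by simp

lemma g1_perm: "g1 permutes \<Omega> 1" using Gi_perm[OF g1_in one_in] .

lemma g1_carrier: "g1 \<in> carrier SG" using Gi_carrier[OF one_in] g1_in by blast

lemma g1_ord: "group.ord SG g1 = p"
  using group.generate_pow_card[OF sym_group_is_group g1_carrier] G1gen Gcard[OF one_in] by simp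

lemma g1_powp: "g1 ^^ p = id"
proof -
  have "g1 [^]\<^bsub>SG\<^esub> (group.ord SG g1) = \<one>\<^bsub>SG\<^esub>" by (rule group.pow_ord_eq_1[OF sym_group_is_group g1_carrier])
  then show ?thesis by (simp only: g1_ord sym_pow sym_group_one)
qed

lemma G1_pow: "x \<in> Gi 1 \<Longrightarrow> \<exists>t. x = g1 ^^ t"
  using group.generate_pow_on_finite_carrier[OF sym_group_is_group fin_SG g1_carrier] G1gen
  by (auto simp: sym_pow)

lemma g1_move: "x \<in> \<Omega> 1 \<Longrightarrow> g1 x \<noteq> x"
proof
  assume x: "x \<in> \<Omega> 1" and fx: "g1 x = x"
  have pw: "(g1 ^^ t) x = x" for t by (induction t) (simp_all add: fx)
  have "\<Omega> 1 \<subseteq> {x}"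
  proof
    fix y assume "y \<in> \<Omega> 1"
    then obtain h where h: "h \<in> H" "y = h x" using orbit[OF one_in x] by blast
    have "restr h (\<Omega> 1) \<in> Gi 1" using h by (simp add: restr_grp_def)
    then obtain t where "restr h (\<Omega> 1) = g1 ^^ t" using G1_pow by blast
    then have "h x = (g1 ^^ t) x" using x by (metis restr_def)
    then show "y \<in> {x}" using h pw by simp
  qed
  then have "card (\<Omega> 1) \<le> card {x}" by (intro card_mono) simp_all
  then have "card (\<Omega> 1) \<le> 1" by simp
  then show False using card_Om[OF one_in] p1 by simp
qed

end


context
  fixes j assumes j: "j \<in> {2..k}"
begin

lemma j_in: "j \<in> {1..k}" using j by simp
lemma j1_in: "1 \<in> {1..k}" using j by simp
lemma j_ne1: "j \<noteq> 1" using j by simp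
lemma disj1j: "\<Omega> 1 \<inter> \<Omega> j = {}" using disj[OF j1_in j_in] j_ne1 by simp

lemma phi_bij: "bij_betw (\<phi> j) (\<Omega> 1) (\<Omega> j)"
  using iso[OF j] by (simp add: perm_iso_witness_def)

lemma P_A: "x \<in> \<Omega> 1 \<Longrightarrow> P j x = \<phi> j x"
  by (simp add: phibar_def)

lemma phi_in: "x \<in> \<Omega> 1 \<Longrightarrow> \<phi> j x \<in> \<Omega> j"
  using phi_bij by (meson bij_betw_apply)

lemma P_B: "x \<in> \<Omega> j \<Longrightarrow> P j x = inv_into (\<Omega> 1) (\<phi> j) x"
  using disj1j by (auto simp: phibar_def)

lemma P_B_in: "x \<in> \<Omega> j \<Longrightarrow> P j x \<in> \<Omega> 1"
  using P_B phi_bij by (metis bij_betw_def inv_into_into)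

lemma phi_P_B: "x \<in> \<Omega> j \<Longrightarrow> \<phi> j (P j x) = x"
  using P_B phi_bij by (metis bij_betw_def f_inv_into_f)

lemma P_out: "x \<notin> \<Omega> 1 \<Longrightarrow> x \<notin> \<Omega> j \<Longrightarrow> P j x = x"
  by (simp add: phibar_def)

lemma P_inv: "P j (P j x) = x"
proof -
  consider "x \<in> \<Omega> 1" | "x \<in> \<Omega> j" | "x \<notin> \<Omega> 1" "x \<notin> \<Omega> j" by blast
  then show ?thesis
  proof cases
    case 1
    have "P j x \<in> \<Omega> j" using 1 P_A phi_in by simp
    then have "P j (P j x) = inv_into (\<Omega> 1) (\<phi> j) (\<phi> j x)" using P_B P_A 1 by simp
    also have "\<dots> = x" using 1 phi_bij by (simp add: bij_betw_def inv_into_f_f)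
    finally show ?thesis .
  next
    case 2
    then show ?thesis using P_B_in P_A phi_P_B by simp
  next
    case 3 then show ?thesis using P_out by simp
  qed
qed

lemma P_comp: "P j \<circ> P j = id"
  by (rule ext) (simp add: P_inv)

lemma P_inv': "inv' (P j) = P j"
  using P_comp P_comp by (rule inv_unique_comp)

lemma P_perm: "P j permutes {1..n}"
  unfolding permutes_def
proof (intro conjI allI impI)
  fix x assume "x \<notin> {1..n}"
  then have "x \<notin> \<Omega> 1" "x \<notin> \<Omega> j" using Om_sub[OF j1_in] Om_sub[OF j_in] by auto
  then show "P j x = x" by (rule P_out)
next
  fix y show "\<exists>!x. P j x = y"
    by (rule ex1I[of _ "P j y"]) (simp_all add: P_inv, metis P_inv)
qed

lemma g_j: "g j = P j \<circ> g1 \<circ> P j"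
  using j_ne1 by (simp add: gens_def)

lemma g_j_pow: "g j ^^ t = P j \<circ> g1 ^^ t \<circ> P j"
proof -
  have "P j \<circ> g1 ^^ t \<circ> inv' (P j) = (P j \<circ> g1 \<circ> inv' (P j)) ^^ t"
    by (rule conj_funpow) (rule permutes_bij[OF P_perm])
  then show ?thesis by (simp add: P_inv' g_j)
qed

lemma g_j_powp: "g j ^^ p = id"
  using g_j_pow g1_powp[OF _] j1_in P_comp by simp

lemma g_j_perm: "g j permutes \<Omega> j"
proof (rule permutes_superset)
  show "g j permutes {1..n}" unfolding g_j
    using P_perm g1_perm[of] j1_in Om_sub[OF j1_in] permutes_subset
    by (metis atLeastAtMost_iff permutes_compose)
  fix x assume x: "x \<in> {1..n} - \<Omega> j"
  show "g j x = x"
  proof (cases "x \<in> \<Omega> 1")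
    case True
    have "P j x \<in> \<Omega> j" using True P_A phi_in by simp
    then have "P j x \<notin> \<Omega> 1" using disj1j by blast
    then have "g1 (P j x) = P j x" using g1_perm j1_in permutes_not_in by fastforce
    then show ?thesis using P_inv by (simp add: g_j)
  next
    case False
    then have "P j x = x" using x P_out by simp
    moreover have "g1 x = x" using g1_perm j1_in permutes_not_in False by fastforce
    ultimately show ?thesis by (simp add: g_j)
  qed
qed

lemma g_j_move: "x \<in> \<Omega> j \<Longrightarrow> g j x \<noteq> x"
proof
  assume x: "x \<in> \<Omega> j" and e: "g j x = x"
  have "P j x \<in> \<Omega> 1" using P_B_in x by simp
  moreover have "g1 (P j x) = P j x"
    using e by (simp add: g_j) (metis P_inv)
  ultimately show False using g1_move j1_in by auto
qed

lemma psi_facts: obtains \<psi> where "bij_betw \<psi> (Gi 1) (Gi j)"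
  "\<And>a b. a \<in> Gi 1 \<Longrightarrow> b \<in> Gi 1 \<Longrightarrow> \<psi> (a \<circ> b) = \<psi> a \<circ> \<psi> b"
  "\<And>a x. a \<in> Gi 1 \<Longrightarrow> x \<in> \<Omega> 1 \<Longrightarrow> \<phi> j (a x) = \<psi> a (\<phi> j x)"
proof -
  obtain \<psi> where "bij_betw \<psi> (Gi 1) (Gi j)" "\<forall>a\<in>Gi 1. \<forall>b\<in>Gi 1. \<psi> (a \<circ> b) = \<psi> a \<circ> \<psi> b"
    "\<forall>a\<in>Gi 1. \<forall>x\<in>\<Omega> 1. \<phi> j (a x) = \<psi> a (\<phi> j x)"
    using iso[OF j] unfolding perm_iso_witness_def by blast
  then show ?thesis by (intro that) blast+
qed

lemma g_j_in_pow: "g j \<in> Gi j \<and> (\<forall>x \<in> Gi j. \<exists>t. x = g j ^^ t)"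
proof -
  obtain \<psi> where bij: "bij_betw \<psi> (Gi 1) (Gi j)"
    and hom: "\<And>a b. a \<in> Gi 1 \<Longrightarrow> b \<in> Gi 1 \<Longrightarrow> \<psi> (a \<circ> b) = \<psi> a \<circ> \<psi> b"
    and cmp: "\<And>a x. a \<in> Gi 1 \<Longrightarrow> x \<in> \<Omega> 1 \<Longrightarrow> \<phi> j (a x) = \<psi> a (\<phi> j x)"
    using psi_facts by metis
  have k1: "1 \<le> k" using j by simp
  have psig1: "\<psi> g1 \<in> Gi j" by (rule bij_betw_apply[OF bij g1_in])
  then have psig1p: "\<psi> g1 permutes \<Omega> j" using Gi_perm j_in by blast
  have eq: "\<psi> g1 = g j"
  proof
    fix y
    consider "y \<in> \<Omega> j" | "y \<in> \<Omega> 1" | "y \<notin> \<Omega> 1" "y \<notin> \<Omega> j" by blast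
    then show "\<psi> g1 y = g j y"
    proof cases
      case 1
      let ?x = "P j y"
      have x: "?x \<in> \<Omega> 1" using P_B_in 1 by simp
      have gx: "g1 ?x \<in> \<Omega> 1" using x g1_perm[OF k1] permutes_in_image by fastforce
      have "g j y = \<phi> j (g1 ?x)" using gx by (simp add: g_j P_A)
      also have "\<dots> = \<psi> g1 (\<phi> j ?x)" using cmp[OF g1_in x] .
      also have "\<dots> = \<psi> g1 y" using phi_P_B 1 by simp
      finally show ?thesis by simp
    next
      case 2
      have "y \<notin> \<Omega> j" using 2 disj1j by blast
      then have "\<psi> g1 y = y" using psig1p permutes_not_in by fastforce
      moreover have "g j y = y" using g_j_perm \<open>y \<notin> \<Omega> j\<close> permutes_not_in by fastforce
      ultimately show ?thesis by simp
    next
      case 3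
      then have "\<psi> g1 y = y" using psig1p permutes_not_in by fastforce
      moreover have "g j y = y" using g_j_perm 3 permutes_not_in by fastforce
      ultimately show ?thesis by simp
    qed
  qed
  have psiid: "\<psi> id = id"
  proof -
    have "\<psi> id = \<psi> id \<circ> \<psi> id" using hom[OF Gi_id Gi_id] by simp
    moreover have "inj (\<psi> id)" using bij Gi_id Gi_perm j_in permutes_inj by (metis bij_betw_apply)
    ultimately show ?thesis by (metis comp_apply eq_id_iff injD)
  qed
  have pw: "\<psi> (g1 ^^ t) = g j ^^ t" for t
  proof (induction t)
    case 0 then show ?case by (simp only: funpow.simps(1) psiid)
  next
    case (Suc t)
    have "\<psi> (g1 ^^ Suc t) = \<psi> (g1 \<circ> g1 ^^ t)" by simp
    also have "\<dots> = \<psi> g1 \<circ> \<psi> (g1 ^^ t)" using hom[OF g1_in Gi_pow_closed[OF g1_in j1_in]] .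
    also have "\<dots> = g j \<circ> g j ^^ t" by (simp only: Suc.IH eq)
    finally show ?case by (simp only: funpow.simps(2))
  qed
  have "\<forall>x \<in> Gi j. \<exists>t. x = g j ^^ t"
  proof
    fix x assume "x \<in> Gi j"
    then obtain y where "y \<in> Gi 1" "x = \<psi> y" using bij by (metis bij_betw_imp_surj_on imageE)
    then show "\<exists>t. x = g j ^^ t" using G1_pow[OF k1] pw by blast
  qed
  then show ?thesis using psig1 eq by simp
qed

end

section \<open>the generators\<close>

lemma g_1: "g 1 = g1" by (simp add: gens_def)

lemma i_k1: "i \<in> {1..k} \<Longrightarrow> 1 \<le> k" by simp

lemma i_cases: "i \<in> {1..k} \<Longrightarrow> i = 1 \<or> i \<in> {2..k}" by auto

lemma g_perm: "i \<in> {1..k} \<Longrightarrow> g i permutes \<Omega> i"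
  using i_cases g_1 g1_perm g_j_perm by (metis i_k1)

lemma g_permn: "i \<in> {1..k} \<Longrightarrow> g i permutes {1..n}"
  using g_perm Om_sub permutes_subset by blast

lemma g_powp: "i \<in> {1..k} \<Longrightarrow> g i ^^ p = id"
  using i_cases g_1 g1_powp g_j_powp by (metis i_k1)

lemma g_move: "i \<in> {1..k} \<Longrightarrow> x \<in> \<Omega> i \<Longrightarrow> g i x \<noteq> x"
  using i_cases g_1 g1_move g_j_move by (metis i_k1)

lemma g_in: "i \<in> {1..k} \<Longrightarrow> g i \<in> Gi i"
  using i_cases g_1 g1_in g_j_in_pow by metis

lemma Gi_pow: "i \<in> {1..k} \<Longrightarrow> x \<in> Gi i \<Longrightarrow> \<exists>t. x = g i ^^ t"
  using i_cases g_1 G1_pow g_j_in_pow by (metis i_k1)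


lemma g_pow_permn: "i \<in> {1..k} \<Longrightarrow> g i ^^ t permutes {1..n}"
  using g_permn permutes_funpow by blast

lemma g_pow_perm: "i \<in> {1..k} \<Longrightarrow> g i ^^ t permutes \<Omega> i"
  using g_perm permutes_funpow by blast

lemma g_pow_mod: "i \<in> {1..k} \<Longrightarrow> g i ^^ t = g i ^^ (t mod p)"
  using g_powp funpow_mod_id by blast

lemma coprime_p: "\<not> p dvd t \<Longrightarrow> coprime t p"
  using prime by (simp add: prime_imp_coprime coprime_commute)

lemma gpow_move:
  assumes i: "i \<in> {1..k}" and x: "x \<in> \<Omega> i" and t: "\<not> p dvd t"
  shows "(g i ^^ t) x \<noteq> x"
proof
  assume fx: "(g i ^^ t) x = x"
  have fm: "((g i ^^ t) ^^ m) x = x" for m by (induction m) (simp_all add: fx)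
  obtain m where m: "[t * m = Suc 0] (mod p)" using cong_solve_coprime_nat[OF coprime_p[OF t]] by blast
  have "(g i ^^ t) ^^ m = g i ^^ (t * m)" by (simp add: funpow_mult mult.commute)
  also have "\<dots> = g i ^^ ((t * m) mod p)" by (rule g_pow_mod[OF i])
  also have "(t * m) mod p = 1" using m p1 by (simp add: cong_def One_nat_def)
  finally have "g i x = x" using fm[of m] by (simp add: One_nat_def)
  then show False using g_move[OF i x] by simp
qed

lemma gpow_eq:
  assumes i: "i \<in> {1..k}" and e: "g i ^^ s = g i ^^ t"
  shows "s mod p = t mod p"
proof -
  have e': "g i ^^ (s mod p) = g i ^^ (t mod p)" using e g_pow_mod[OF i] by metis
  obtain x where x: "x \<in> \<Omega> i" using Om_ne[OF i] by blast
  have main: "a = b" if ab: "a \<le> b" "b < p" "g i ^^ a = g i ^^ b" for a b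
  proof (rule ccontr)
    assume "a \<noteq> b"
    then have lt: "0 < b - a" "b - a < p" using ab by auto
    let ?w = "(g i ^^ a) x"
    have w: "?w \<in> \<Omega> i" using g_pow_perm[OF i] x permutes_in_image by fastforce
    have "(g i ^^ (b - a)) ?w = (g i ^^ (b - a + a)) x" by (simp add: funpow_add)
    also have "b - a + a = b" using ab by simp
    finally have "(g i ^^ (b - a)) ?w = ?w" using ab by simp
    moreover have "\<not> p dvd (b - a)" using lt by (simp add: nat_dvd_not_less)
    ultimately show False using gpow_move[OF i w] by blast
  qed
  show ?thesis
  proof (cases "s mod p \<le> t mod p")
    case True then show ?thesis using main e' p0 by simp
  next
    case False then show ?thesis using main[of "t mod p" "s mod p"] e' p0 by simp
  qed
qed

abbreviation "E \<equiv> elem g k"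
abbreviation "V \<equiv> vecs p k"

lemma foldr_in:
  "set L \<subseteq> {1..k} \<Longrightarrow> distinct L \<Longrightarrow> i \<in> {1..k} \<Longrightarrow> x \<in> \<Omega> i \<Longrightarrow>
   foldr (\<lambda>i f. (g i ^^ r i) \<circ> f) L id x = (if i \<in> set L then (g i ^^ r i) x else x)"
proof (induction L)
  case Nil then show ?case by simp
next
  case (Cons j L)
  have j: "j \<in> {1..k}" using Cons by simp
  define y where "y = foldr (\<lambda>i f. (g i ^^ r i) \<circ> f) L id x"
  have IH: "y = (if i \<in> set L then (g i ^^ r i) x else x)"
    unfolding y_def by (rule Cons.IH) (use Cons.prems in auto)
  have step: "foldr (\<lambda>i f. (g i ^^ r i) \<circ> f) (j#L) id x = (g j ^^ r j) y"
    unfolding y_def by (rule foldr_comp_Cons)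
  show ?case
  proof (cases "j = i")
    case True
    then have "i \<notin> set L" using Cons by auto
    then show ?thesis unfolding step using IH True by simp
  next
    case False
    have "y \<in> \<Omega> i" using IH Cons.prems g_pow_perm permutes_in_image
      by (cases "i \<in> set L") fastforce+
    then have "y \<notin> \<Omega> j" using Om_disj[OF Cons.prems(3) j] False by blast
    then have "(g j ^^ r j) y = y" using g_pow_perm[OF j] permutes_not_in by fastforce
    then show ?thesis unfolding step using IH False by simp
  qed
qed

lemma foldr_perm: "set L \<subseteq> {1..k} \<Longrightarrow> foldr (\<lambda>i f. (g i ^^ r i) \<circ> f) L id permutes {1..n}"
proof (induction L)
  case Nil show ?case unfolding foldr_comp_Nil by (rule permutes_id)
next
  case (Cons j L)
  have A: "foldr (\<lambda>i f. (g i ^^ r i) \<circ> f) (j#L) id = (g j ^^ r j) \<circ> foldr (\<lambda>i f. (g i ^^ r i) \<circ> f) L id"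
    by (rule foldr_comp_Cons')
  have B: "g j ^^ r j permutes {1..n}" by (rule g_pow_permn) (use Cons.prems in simp)
  have C: "foldr (\<lambda>i f. (g i ^^ r i) \<circ> f) L id permutes {1..n}" by (rule Cons.IH) (use Cons.prems in simp)
  show ?case unfolding A by (rule permutes_compose[OF C B])
qed

lemma set_upt1: "set [1..<Suc k] = {1..k}" by auto

lemma E_in:
  assumes i: "i \<in> {1..k}" and x: "x \<in> \<Omega> i" shows "E r x = (g i ^^ r i) x"
proof -
  have "foldr (\<lambda>i f. (g i ^^ r i) \<circ> f) [1..<Suc k] id x = (if i \<in> set [1..<Suc k] then (g i ^^ r i) x else x)"
    by (rule foldr_in) (use i x in \<open>simp_all only: set_upt1 distinct_upt subset_refl\<close>)
  then have "foldr (\<lambda>i f. (g i ^^ r i) \<circ> f) [1..<Suc k] id x = (g i ^^ r i) x"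
    by (simp only: set_upt1 if_P[OF i])
  then show ?thesis unfolding elem_def .
qed

lemma E_perm: "E r permutes {1..n}"
proof -
  have "foldr (\<lambda>i f. (g i ^^ r i) \<circ> f) [1..<Suc k] id permutes {1..n}"
    by (rule foldr_perm) (simp only: set_upt1 subset_refl)
  then show ?thesis unfolding elem_def .
qed

lemma E_out: "x \<notin> {1..n} \<Longrightarrow> E r x = x"
  by (rule permutes_not_in[OF E_perm])

lemma in_some: "x \<in> {1..n} \<Longrightarrow> \<exists>i\<in>{1..k}. x \<in> \<Omega> i"
proof -
  assume "x \<in> {1..n}"
  then have "x \<in> (\<Union>i\<in>{1..k}. \<Omega> i)" using union by simp
  then show ?thesis by (simp only: UN_iff)
qed

lemma E_eqI:
  assumes "\<And>i x. i \<in> {1..k} \<Longrightarrow> x \<in> \<Omega> i \<Longrightarrow> f x = (g i ^^ r i) x"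
    and "\<And>x. x \<notin> {1..n} \<Longrightarrow> f x = x"
  shows "f = E r"
proof
  fix x show "f x = E r x"
  proof (cases "x \<in> {1..n}")
    case True
    then obtain i where "i \<in> {1..k}" "x \<in> \<Omega> i" using in_some by blast
    then show ?thesis using assms(1) E_in by simp
  next
    case False then show ?thesis using assms(2) E_out by simp
  qed
qed

lemma E_inj: "inj_on E V"
proof
  fix r s assume r: "r \<in> V" and s: "s \<in> V" and e: "E r = E s"
  show "r = s"
  proof (rule vecs_eqI[OF r s])
    fix i assume i: "i \<in> {1..k}"
    have "g i ^^ r i = g i ^^ s i"
    proof
      fix x show "(g i ^^ r i) x = (g i ^^ s i) x"
      proof (cases "x \<in> \<Omega> i")
        case True then show ?thesis using E_in[OF i True] e by metis
      next
        case False then show ?thesis using g_pow_perm[OF i] permutes_not_in by metis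
      qed
    qed
    then have "r i mod p = s i mod p" using gpow_eq[OF i] by blast
    then show "r i = s i" using vecs_lt[OF r p0] vecs_lt[OF s p0] by simp
  qed
qed

lemma E_vadd: "E (vadd p u v) = E u \<circ> E v"
proof (rule sym, rule E_eqI)
  fix i x assume i: "i \<in> {1..k}" and x: "x \<in> \<Omega> i"
  have "E v x \<in> \<Omega> i" using E_in[OF i x] g_pow_perm[OF i] x permutes_in_image by fastforce
  then have "(E u \<circ> E v) x = (g i ^^ u i) ((g i ^^ v i) x)" using E_in[OF i] x by simp
  also have "\<dots> = (g i ^^ (u i + v i)) x" by (simp add: funpow_add)
  also have "\<dots> = (g i ^^ vadd p u v i) x" using g_pow_mod[OF i] by (metis vadd_def)
  finally show "(E u \<circ> E v) x = (g i ^^ vadd p u v i) x" .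
next
  fix x assume "x \<notin> {1..n}" then show "(E u \<circ> E v) x = x" using E_out by simp
qed

lemma E_zv: "E zv = id"
  by (rule sym, rule E_eqI) (simp_all add: zv_def)

abbreviation "GG \<equiv> prod_grp n k \<Omega> Gi"

lemma E_GG: "E r \<in> GG"
  unfolding prod_grp_def
proof (intro CollectI conjI ballI)
  show "E r \<in> carrier SG" using E_perm by (simp add: sym_group_carrier)
  fix i assume i: "i \<in> {1..k}"
  have "restr (E r) (\<Omega> i) = g i ^^ r i"
  proof
    fix x show "restr (E r) (\<Omega> i) x = (g i ^^ r i) x"
    proof (cases "x \<in> \<Omega> i")
      case True then show ?thesis using E_in[OF i True] by (simp add: restr_def)
    next
      case False then show ?thesis using permutes_not_in[OF g_pow_perm[OF i] False] by (simp add: restr_def)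
    qed
  qed
  then show "restr (E r) (\<Omega> i) \<in> Gi i" using Gi_pow_closed[OF g_in[OF i] i] by simp
qed

lemma GG_E: "x \<in> GG \<Longrightarrow> \<exists>r\<in>V. x = E r"
proof -
  assume x: "x \<in> GG"
  then have xp: "x permutes {1..n}" by (simp add: prod_grp_def sym_group_carrier)
  have "\<forall>i\<in>{1..k}. \<exists>t. restr x (\<Omega> i) = g i ^^ t"
  proof
    fix i assume i: "i \<in> {1..k}"
    have "restr x (\<Omega> i) \<in> Gi i" using x i unfolding prod_grp_def by blast
    then show "\<exists>t. restr x (\<Omega> i) = g i ^^ t" by (rule Gi_pow[OF i])
  qed
  then obtain T where T: "\<And>i. i \<in> {1..k} \<Longrightarrow> restr x (\<Omega> i) = g i ^^ T i" by metis
  define r where "r = (\<lambda>i. if i \<in> {1..k} then T i mod p else 0)"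
  have rV: "r \<in> V" using p0 by (simp add: r_def vecs_def)
  have "x = E r"
  proof (rule E_eqI)
    fix i y assume i: "i \<in> {1..k}" and y: "y \<in> \<Omega> i"
    have "x y = restr x (\<Omega> i) y" using y by (simp add: restr_def)
    also have "\<dots> = (g i ^^ T i) y" using T[OF i] by simp
    also have "\<dots> = (g i ^^ r i) y" using g_pow_mod[OF i] i by (simp add: r_def)
    finally show "x y = (g i ^^ r i) y" .
  next
    fix y assume "y \<notin> {1..n}" then show "x y = y" by (rule permutes_not_in[OF xp])
  qed
  then show ?thesis using rV by blast
qed

abbreviation "\<gamma> \<equiv> gamma g p k"

lemma gamma_E: "r \<in> V \<Longrightarrow> \<gamma> (E r) = r"
  unfolding gamma_def by (rule the_equality) (auto dest: inj_onD[OF E_inj])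

lemma gamma_GG: "x \<in> GG \<Longrightarrow> \<gamma> x \<in> V \<and> E (\<gamma> x) = x"
  using GG_E gamma_E by metis

lemma H_GG: "H \<subseteq> GG"
  using H_perm by (auto simp: prod_grp_def sym_group_carrier restr_grp_def)

abbreviation "C \<equiv> \<gamma> ` H"

lemma C_V: "C \<subseteq> V" using H_GG gamma_GG by blast

lemma H_eq: "H = E ` C"
proof -
  have "E ` C = (\<lambda>x. E (\<gamma> x)) ` H" by (simp add: image_image)
  also have "\<dots> = H" using H_GG gamma_GG by (auto simp: image_iff) (metis subsetD)+
  finally show ?thesis by simp
qed

lemma code_C: "code p k C"
  unfolding code_def
proof (intro conjI ballI)
  show "C \<subseteq> V" by (rule C_V)
  have "\<gamma> id = zv" using gamma_E[OF zv_vecs[OF p0]] E_zv by simp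
  then show "zv \<in> C" using H_id by (metis image_eqI)
  fix u v assume u: "u \<in> C" and v: "v \<in> C"
  then have uv: "u \<in> V" "v \<in> V" using C_V by auto
  obtain h1 h2 where h: "h1 \<in> H" "h2 \<in> H" "u = \<gamma> h1" "v = \<gamma> h2" using u v by blast
  have "E u = h1" "E v = h2" using h H_GG gamma_GG by auto
  then have "E (vadd p u v) \<in> H" using E_vadd H_comp h by simp
  moreover have "\<gamma> (E (vadd p u v)) = vadd p u v" using gamma_E vadd_vecs[OF uv p0] by simp
  ultimately show "vadd p u v \<in> C" by (metis image_eqI)
qed

lemma Hperp_eq: "{x \<in> GG. \<gamma> x \<in> perp p k C} = E ` perp p k C"
proof
  show "{x \<in> GG. \<gamma> x \<in> perp p k C} \<subseteq> E ` perp p k C"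
    using gamma_GG by (auto simp: image_iff) (metis)
  show "E ` perp p k C \<subseteq> {x \<in> GG. \<gamma> x \<in> perp p k C}"
    using E_GG gamma_E by (auto simp: perp_def)
qed


section \<open>conjugation\<close>


lemma conj_maps:
  assumes \<sigma>: "\<sigma> permutes {1..n}" and \<pi>: "\<pi> permutes {1..k}"
    and eq: "\<forall>i\<in>{1..k}. \<sigma> \<circ> g i \<circ> inv' \<sigma> = g (\<pi> i) ^^ a i"
    and i: "i \<in> {1..k}" and x: "x \<in> \<Omega> i"
  shows "\<sigma> x \<in> \<Omega> (\<pi> i)"
proof (rule ccontr)
  assume nx: "\<sigma> x \<notin> \<Omega> (\<pi> i)"
  have pi: "\<pi> i \<in> {1..k}" using permutes_in_image[OF \<pi>] i by blast
  have "(g (\<pi> i) ^^ a i) (\<sigma> x) = (\<sigma> \<circ> g i \<circ> inv' \<sigma>) (\<sigma> x)" using eq i by simp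
  also have "\<dots> = \<sigma> (g i x)" by (simp add: permutes_inverses[OF \<sigma>])
  finally have e1: "(g (\<pi> i) ^^ a i) (\<sigma> x) = \<sigma> (g i x)" .
  have "(g (\<pi> i) ^^ a i) (\<sigma> x) = \<sigma> x" by (rule permutes_not_in[OF g_pow_perm[OF pi] nx])
  then have "\<sigma> (g i x) = \<sigma> x" using e1 by simp
  then have "g i x = x" using permutes_inj[OF \<sigma>] by (meson injD)
  then show False using g_move[OF i x] by simp
qed

lemma conj_E:
  assumes \<sigma>: "\<sigma> permutes {1..n}" and \<pi>: "\<pi> permutes {1..k}"
    and eq: "\<forall>i\<in>{1..k}. \<sigma> \<circ> g i \<circ> inv' \<sigma> = g (\<pi> i) ^^ a i"
  shows "\<sigma> \<circ> E r \<circ> inv' \<sigma> = E (Mv p k \<pi> a r)"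
proof (rule E_eqI)
  fix j y assume j: "j \<in> {1..k}" and y: "y \<in> \<Omega> j"
  define i where "i = inv' \<pi> j"
  have i: "i \<in> {1..k}" using permutes_in_image[OF permutes_inv[OF \<pi>]] j unfolding i_def by blast
  have pij: "\<pi> i = j" unfolding i_def by (rule permutes_inverses(1)[OF \<pi>])
  define x where "x = inv' \<sigma> y"
  have yx: "\<sigma> x = y" unfolding x_def by (rule permutes_inverses(1)[OF \<sigma>])
  have "y \<in> {1..n}" using Om_sub[OF j] y by blast
  then have "x \<in> {1..n}" unfolding x_def using permutes_in_image[OF permutes_inv[OF \<sigma>]] by blast
  then obtain i' where i': "i' \<in> {1..k}" "x \<in> \<Omega> i'" using in_some by blast
  have "y \<in> \<Omega> (\<pi> i')" using conj_maps[OF \<sigma> \<pi> eq i'] yx by simp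
  moreover have "\<pi> i' \<in> {1..k}" using permutes_in_image[OF \<pi>] i'(1) by blast
  ultimately have "\<pi> i' = j" using Om_disj j y by blast
  then have "i' = i" using pij permutes_inj[OF \<pi>] by (metis injD)
  then have x: "x \<in> \<Omega> i" using i' by simp
  have "(\<sigma> \<circ> E r \<circ> inv' \<sigma>) y = \<sigma> ((g i ^^ r i) x)" using E_in[OF i x] by (simp add: x_def)
  also have "\<dots> = (\<sigma> \<circ> g i ^^ r i \<circ> inv' \<sigma>) y" by (simp add: x_def)
  also have "\<sigma> \<circ> g i ^^ r i \<circ> inv' \<sigma> = (\<sigma> \<circ> g i \<circ> inv' \<sigma>) ^^ r i"
    by (rule conj_funpow[OF permutes_bij[OF \<sigma>]])
  also have "\<dots> = (g j ^^ a i) ^^ r i" using eq i pij by simp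
  also have "\<dots> = g j ^^ (a i * r i)" by (simp add: funpow_mult)
  also have "\<dots> = g j ^^ ((a i * r i) mod p)" by (rule g_pow_mod[OF j])
  also have "(a i * r i) mod p = Mv p k \<pi> a r j" using Mv_pi[OF \<pi> i, of p a r] pij by simp
  finally show "(\<sigma> \<circ> E r \<circ> inv' \<sigma>) y = (g j ^^ Mv p k \<pi> a r j) y" .
next
  fix y assume y: "y \<notin> {1..n}"
  have "inv' \<sigma> y = y" by (rule permutes_not_in[OF permutes_inv[OF \<sigma>] y])
  then show "(\<sigma> \<circ> E r \<circ> inv' \<sigma>) y = y" using E_out[OF y] permutes_not_in[OF \<sigma> y] by simp
qed

lemma norm_E:
  assumes \<sigma>: "\<sigma> permutes {1..n}" and \<pi>: "\<pi> permutes {1..k}"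
    and cop: "\<forall>i\<in>{1..k}. coprime (a i) p"
    and eq: "\<forall>i\<in>{1..k}. \<sigma> \<circ> g i \<circ> inv' \<sigma> = g (\<pi> i) ^^ a i"
    and D: "D \<subseteq> V"
  shows "\<sigma> \<in> normalizer SG (E ` D) \<longleftrightarrow> Mv p k \<pi> a ` D = D"
proof -
  have sub: "E ` D \<subseteq> carrier SG" using E_perm by (auto simp: sym_group_carrier)
  have "(\<lambda>h. \<sigma> \<circ> h \<circ> inv' \<sigma>) ` E ` D = E ` (Mv p k \<pi> a ` D)"
    unfolding image_image using conj_E[OF \<sigma> \<pi> eq] by simp
  moreover have "Mv p k \<pi> a ` D \<subseteq> V" using Mv_V[OF p0] by blast
  ultimately have "(\<lambda>h. \<sigma> \<circ> h \<circ> inv' \<sigma>) ` E ` D = E ` D \<longleftrightarrow> Mv p k \<pi> a ` D = D"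
    using inj_on_image_eq_iff[OF E_inj _ D] by simp
  then show ?thesis using normalizer_sym[OF sub] \<sigma> by simp
qed

definition PermG where
  "PermG \<sigma> \<pi> \<longleftrightarrow> \<sigma> permutes {1..n} \<and> \<pi> permutes {1..k} \<and> (\<forall>i\<in>{1..k}. \<sigma> \<circ> g i \<circ> inv' \<sigma> = g (\<pi> i))"

definition DiagG where
  "DiagG \<beta> a \<longleftrightarrow> \<beta> permutes {1..n} \<and> (\<forall>i\<in>{1..k}. coprime (a i) p \<and> \<beta> \<circ> g i \<circ> inv' \<beta> = g i ^^ a i)"

lemma PermG_id: "PermG id id"
  unfolding PermG_def by (simp add: permutes_id)

lemma PermG_comp: "PermG \<sigma>1 \<pi>1 \<Longrightarrow> PermG \<sigma>2 \<pi>2 \<Longrightarrow> PermG (\<sigma>1 \<circ> \<sigma>2) (\<pi>1 \<circ> \<pi>2)"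
  unfolding PermG_def
proof (elim conjE, intro conjI ballI)
  assume a: "\<sigma>1 permutes {1..n}" "\<pi>1 permutes {1..k}" "\<forall>i\<in>{1..k}. \<sigma>1 \<circ> g i \<circ> inv' \<sigma>1 = g (\<pi>1 i)"
    "\<sigma>2 permutes {1..n}" "\<pi>2 permutes {1..k}" "\<forall>i\<in>{1..k}. \<sigma>2 \<circ> g i \<circ> inv' \<sigma>2 = g (\<pi>2 i)"
  show "\<sigma>1 \<circ> \<sigma>2 permutes {1..n}" using a permutes_compose by blast
  show "\<pi>1 \<circ> \<pi>2 permutes {1..k}" using a permutes_compose by blast
  fix i assume i: "i \<in> {1..k}"
  have pi: "\<pi>2 i \<in> {1..k}" using permutes_in_image[OF a(5)] i by blast
  have "(\<sigma>1 \<circ> \<sigma>2) \<circ> g i \<circ> inv' (\<sigma>1 \<circ> \<sigma>2) = \<sigma>1 \<circ> (\<sigma>2 \<circ> g i \<circ> inv' \<sigma>2) \<circ> inv' \<sigma>1"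
    by (rule conj_comp[OF permutes_bij[OF a(1)] permutes_bij[OF a(4)]])
  also have "\<dots> = g (\<pi>1 (\<pi>2 i))" using a(3,6) i pi by simp
  finally show "(\<sigma>1 \<circ> \<sigma>2) \<circ> g i \<circ> inv' (\<sigma>1 \<circ> \<sigma>2) = g ((\<pi>1 \<circ> \<pi>2) i)" by simp
qed

lemma PermG_P:
  assumes j: "j \<in> {2..k}"
  shows "PermG (P j) (transpose 1 j)"
  unfolding PermG_def
proof (intro conjI ballI)
  show "P j permutes {1..n}" by (rule P_perm[OF j])
  show "transpose 1 j permutes {1..k}" using j by (intro permutes_swap_id) auto
  fix i assume i: "i \<in> {1..k}"
  have inv: "inv' (P j) = P j" by (rule P_inv'[OF j])
  have k1: "1 \<le> k" using j by simp
  show "P j \<circ> g i \<circ> inv' (P j) = g (transpose 1 j i)"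
  proof -
    consider "i = 1" | "i = j" | "i \<noteq> 1" "i \<noteq> j" by blast
    then show ?thesis
    proof cases
      case 1
      then show ?thesis using inv g_j[OF j] g_1 by (simp add: comp_assoc)
    next
      case 2
      have "P j \<circ> g j \<circ> P j = (P j \<circ> P j) \<circ> g1 \<circ> (P j \<circ> P j)" by (simp add: g_j[OF j] comp_assoc)
      also have "\<dots> = g1" by (simp add: P_comp[OF j])
      finally show ?thesis using inv g_1 2 by simp
    next
      case 3
      have tr: "transpose 1 j i = i" using 3 by (simp add: transpose_def)
      have "P j \<circ> g i \<circ> P j = g i"
      proof
        fix x
        have gi: "g i permutes \<Omega> i" by (rule g_perm[OF i])
        have d1: "\<Omega> 1 \<inter> \<Omega> i = {}" using disj[OF j1_in[OF j] i] 3 by auto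
        have dj: "\<Omega> j \<inter> \<Omega> i = {}" using disj[OF j_in[OF j] i] 3 by auto
        show "(P j \<circ> g i \<circ> P j) x = g i x"
        proof (cases "x \<in> \<Omega> 1 \<or> x \<in> \<Omega> j")
          case True
          have "P j x \<in> \<Omega> 1 \<or> P j x \<in> \<Omega> j"
            using True P_A[OF j] phi_in[OF j] P_B_in[OF j] by auto
          then have "P j x \<notin> \<Omega> i" using d1 dj by blast
          then have "g i (P j x) = P j x" by (rule permutes_not_in[OF gi])
          moreover have "x \<notin> \<Omega> i" using True d1 dj by blast
          ultimately show ?thesis using permutes_not_in[OF gi] P_inv[OF j] by simp
        next
          case False
          then have px: "P j x = x" using P_out[OF j] by simp
          show ?thesis
          proof (cases "x \<in> \<Omega> i")
            case True
            then have "g i x \<in> \<Omega> i" using permutes_in_image[OF gi] by blast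
            then have "g i x \<notin> \<Omega> 1" "g i x \<notin> \<Omega> j" using d1 dj by blast+
            then show ?thesis using px P_out[OF j] by simp
          next
            case False
            then show ?thesis using px permutes_not_in[OF gi False] by simp
          qed
        qed
      qed
      then show ?thesis using inv tr by simp
    qed
  qed
qed

lemma K_gen: "\<kappa> \<in> generate SG (P ` {2..k}) \<Longrightarrow> \<exists>\<pi>. PermG \<kappa> \<pi>"
proof (induction rule: generate.induct)
  case one show ?case unfolding sym_group_one using PermG_id by blast
next
  case (incl h) then show ?case using PermG_P by blast
next
  case (inv h)
  then obtain j where j: "j \<in> {2..k}" "h = P j" by blast
  have "h \<in> carrier SG" using P_perm[OF j(1)] j(2) by (simp add: sym_group_carrier)
  then have "inv\<^bsub>SG\<^esub> h = P j" using P_inv'[OF j(1)] j(2) by simp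
  then show ?case using PermG_P[OF j(1)] by metis
next
  case (eng h1 h2)
  then show ?case using PermG_comp by (metis sym_mult)
qed

lemma DiagG_one: "DiagG id (\<lambda>_. 1)"
  unfolding DiagG_def by (simp add: permutes_id One_nat_def)

lemma DiagG_comp:
  assumes "DiagG \<beta>1 a1" "DiagG \<beta>2 a2"
  shows "DiagG (\<beta>1 \<circ> \<beta>2) (\<lambda>i. a1 i * a2 i)"
  unfolding DiagG_def
proof (intro conjI ballI)
  have a: "\<beta>1 permutes {1..n}" "\<forall>i\<in>{1..k}. coprime (a1 i) p \<and> \<beta>1 \<circ> g i \<circ> inv' \<beta>1 = g i ^^ a1 i"
    "\<beta>2 permutes {1..n}" "\<forall>i\<in>{1..k}. coprime (a2 i) p \<and> \<beta>2 \<circ> g i \<circ> inv' \<beta>2 = g i ^^ a2 i"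
    using assms unfolding DiagG_def by auto
  show "\<beta>1 \<circ> \<beta>2 permutes {1..n}" using a permutes_compose by blast
  fix i assume i: "i \<in> {1..k}"
  show "coprime (a1 i * a2 i) p" using a i by simp
  have "(\<beta>1 \<circ> \<beta>2) \<circ> g i \<circ> inv' (\<beta>1 \<circ> \<beta>2) = \<beta>1 \<circ> (\<beta>2 \<circ> g i \<circ> inv' \<beta>2) \<circ> inv' \<beta>1"
    by (rule conj_comp[OF permutes_bij[OF a(1)] permutes_bij[OF a(3)]])
  also have "\<dots> = \<beta>1 \<circ> g i ^^ a2 i \<circ> inv' \<beta>1" using a(4) i by simp
  also have "\<dots> = (\<beta>1 \<circ> g i \<circ> inv' \<beta>1) ^^ a2 i" by (rule conj_funpow[OF permutes_bij[OF a(1)]])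
  also have "\<dots> = (g i ^^ a1 i) ^^ a2 i" using a(2) i by simp
  also have "\<dots> = g i ^^ (a1 i * a2 i)" by (simp add: funpow_mult)
  finally show "(\<beta>1 \<circ> \<beta>2) \<circ> g i \<circ> inv' (\<beta>1 \<circ> \<beta>2) = g i ^^ (a1 i * a2 i)" .
qed

lemma DiagG_inv:
  assumes d: "DiagG \<beta> a"
  shows "\<exists>a'. DiagG (inv' \<beta>) a' \<and> (\<forall>i\<in>{1..k}. [a' i * a i = 1] (mod p))"
proof -
  have b: "\<beta> permutes {1..n}" and a: "\<forall>i\<in>{1..k}. coprime (a i) p \<and> \<beta> \<circ> g i \<circ> inv' \<beta> = g i ^^ a i"
    using d unfolding DiagG_def by auto
  have "\<forall>i\<in>{1..k}. \<exists>x. [a i * x = Suc 0] (mod p)" using a cong_solve_coprime_nat by blast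
  then obtain a' where a': "\<And>i. i \<in> {1..k} \<Longrightarrow> [a i * a' i = Suc 0] (mod p)" by metis
  have bb: "bij \<beta>" by (rule permutes_bij[OF b])
  have "DiagG (inv' \<beta>) a'" unfolding DiagG_def
  proof (intro conjI ballI)
    show "inv' \<beta> permutes {1..n}" by (rule permutes_inv[OF b])
    fix i assume i: "i \<in> {1..k}"
    show "coprime (a' i) p"
    proof (rule coprime_p)
      show "\<not> p dvd a' i"
      proof
        assume "p dvd a' i"
        then have "[a i * a' i = 0] (mod p)" by (simp add: cong_def)
        then have "[Suc 0 = 0] (mod p)" using a'[OF i] by (meson cong_sym cong_trans)
        then show False using p1 by (simp add: cong_def)
      qed
    qed
    have m1: "(a i * a' i) mod p = 1" using a'[OF i] p1 by (simp add: cong_def One_nat_def)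
    have "g i = g i ^^ 1" by (simp add: One_nat_def)
    also have "\<dots> = g i ^^ (a i * a' i)" using g_pow_mod[OF i, of "a i * a' i"] m1 by simp
    also have "\<dots> = (g i ^^ a i) ^^ a' i" by (simp add: funpow_mult)
    also have "\<dots> = (\<beta> \<circ> g i \<circ> inv' \<beta>) ^^ a' i" using a i by simp
    also have "\<dots> = \<beta> \<circ> g i ^^ a' i \<circ> inv' \<beta>" by (rule conj_funpow[OF bb, symmetric])
    finally have gi: "g i = \<beta> \<circ> g i ^^ a' i \<circ> inv' \<beta>" .
    have "inv' \<beta> \<circ> g i \<circ> inv' (inv' \<beta>) = inv' \<beta> \<circ> g i \<circ> \<beta>" using inv_inv_eq[OF bb] by simp
    also have "\<dots> = (inv' \<beta> \<circ> \<beta>) \<circ> g i ^^ a' i \<circ> (inv' \<beta> \<circ> \<beta>)"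
      by (subst gi) (simp add: comp_assoc)
    also have "\<dots> = g i ^^ a' i" using permutes_inv_o(2)[OF b] by simp
    finally show "inv' \<beta> \<circ> g i \<circ> inv' (inv' \<beta>) = g i ^^ a' i" .
  qed
  moreover have "\<forall>i\<in>{1..k}. [a' i * a i = 1] (mod p)" using a' by (simp add: mult.commute One_nat_def)
  ultimately show ?thesis by blast
qed

lemma DiagG_gen:
  assumes i: "i \<in> {1..k}" and xN: "x \<in> normalizer SG (Gi i)" and xp: "x permutes \<Omega> i"
  shows "\<exists>a. DiagG x a"
proof -
  have xn: "x permutes {1..n}" and conj: "(\<lambda>h. x \<circ> h \<circ> inv' x) ` Gi i = Gi i"
    using normalizer_sym[OF Gi_carrier[OF i]] xN by auto
  have bx: "bij x" by (rule permutes_bij[OF xn])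
  have "x \<circ> g i \<circ> inv' x \<in> Gi i" using conj g_in[OF i] by blast
  then obtain t where t: "x \<circ> g i \<circ> inv' x = g i ^^ t" using Gi_pow[OF i] by blast
  have cop: "coprime t p"
  proof (rule coprime_p)
    show "\<not> p dvd t"
    proof
      assume "p dvd t"
      then have "g i ^^ t = id" using g_pow_mod[OF i, of t] by simp
      then have e: "x \<circ> g i \<circ> inv' x = id" using t by simp
      obtain y where y: "y \<in> \<Omega> i" using Om_ne[OF i] by blast
      have "x (g i (inv' x (x y))) = x y" using e by (metis comp_apply id_apply)
      then have "g i y = y" using permutes_inverses(2)[OF xn] permutes_inj[OF xn] by (metis injD)
      then show False using g_move[OF i y] by simp
    qed
  qed
  have other: "x \<circ> g l \<circ> inv' x = g l" if l: "l \<in> {1..k}" "l \<noteq> i" for l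
  proof
    fix y
    have gl: "g l permutes \<Omega> l" by (rule g_perm[OF l(1)])
    have d: "\<Omega> l \<inter> \<Omega> i = {}" using disj[OF l(1) i l(2)] .
    show "(x \<circ> g l \<circ> inv' x) y = g l y"
    proof (cases "y \<in> \<Omega> l")
      case True
      then have "y \<notin> \<Omega> i" using d by blast
      then have "x y = y" by (rule permutes_not_in[OF xp])
      then have iy: "inv' x y = y" using permutes_inv_eq[OF xn] by simp
      have "g l y \<in> \<Omega> l" using permutes_in_image[OF gl] True by blast
      then have "g l y \<notin> \<Omega> i" using d by blast
      then show ?thesis using iy permutes_not_in[OF xp] by simp
    next
      case False
      define z where "z = inv' x y"
      have xz: "x z = y" unfolding z_def by (rule permutes_inverses(1)[OF xn])
      have "z \<notin> \<Omega> l"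
      proof
        assume "z \<in> \<Omega> l"
        then have "z \<notin> \<Omega> i" using d by blast
        then have "x z = z" by (rule permutes_not_in[OF xp])
        then show False using xz False \<open>z \<in> \<Omega> l\<close> by simp
      qed
      then have "g l z = z" by (rule permutes_not_in[OF gl])
      then show ?thesis using xz False permutes_not_in[OF gl False] by (simp add: z_def[symmetric])
    qed
  qed
  have "DiagG x (\<lambda>l. if l = i then t else 1)"
    unfolding DiagG_def
  proof (intro conjI ballI)
    show "x permutes {1..n}" by (rule xn)
    fix l assume l: "l \<in> {1..k}"
    show "coprime (if l = i then t else 1) p" using cop by simp
    show "x \<circ> g l \<circ> inv' x = g l ^^ (if l = i then t else 1)"
      using t other[OF l] by (cases "l = i") (simp_all add: One_nat_def)
  qed
  then show ?thesis by blast
qed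

lemma B_gen:
  "b \<in> generate SG (\<Union>i\<in>{1..k}. {x \<in> normalizer SG (Gi i). x permutes \<Omega> i}) \<Longrightarrow> \<exists>a. DiagG b a"
proof (induction rule: generate.induct)
  case one show ?case unfolding sym_group_one using DiagG_one by blast
next
  case (incl h) then show ?case using DiagG_gen by blast
next
  case (inv h)
  then obtain i where i: "i \<in> {1..k}" "h \<in> normalizer SG (Gi i)" "h permutes \<Omega> i" by blast
  obtain a where a: "DiagG h a" using DiagG_gen[OF i] by blast
  then have "h \<in> carrier SG" by (simp add: DiagG_def sym_group_carrier)
  then have "inv\<^bsub>SG\<^esub> h = inv' h" by simp
  then show ?case using DiagG_inv[OF a] by metis
next
  case (eng h1 h2)
  then show ?case using DiagG_comp by (metis sym_mult)
qed

lemma eq_comb: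
  assumes "PermG \<kappa> \<pi>" "DiagG \<beta> a"
  shows "\<forall>i\<in>{1..k}. (\<kappa> \<circ> \<beta>) \<circ> g i \<circ> inv' (\<kappa> \<circ> \<beta>) = g (\<pi> i) ^^ a i"
proof
  fix i assume i: "i \<in> {1..k}"
  have a: "\<kappa> permutes {1..n}" "\<forall>i\<in>{1..k}. \<kappa> \<circ> g i \<circ> inv' \<kappa> = g (\<pi> i)"
    "\<beta> permutes {1..n}" "\<forall>i\<in>{1..k}. \<beta> \<circ> g i \<circ> inv' \<beta> = g i ^^ a i"
    using assms unfolding PermG_def DiagG_def by auto
  have "(\<kappa> \<circ> \<beta>) \<circ> g i \<circ> inv' (\<kappa> \<circ> \<beta>) = \<kappa> \<circ> (\<beta> \<circ> g i \<circ> inv' \<beta>) \<circ> inv' \<kappa>"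
    by (rule conj_comp[OF permutes_bij[OF a(1)] permutes_bij[OF a(3)]])
  also have "\<dots> = \<kappa> \<circ> g i ^^ a i \<circ> inv' \<kappa>" using a(4) i by simp
  also have "\<dots> = (\<kappa> \<circ> g i \<circ> inv' \<kappa>) ^^ a i" by (rule conj_funpow[OF permutes_bij[OF a(1)]])
  also have "\<dots> = g (\<pi> i) ^^ a i" using a(2) i by simp
  finally show "(\<kappa> \<circ> \<beta>) \<circ> g i \<circ> inv' (\<kappa> \<circ> \<beta>) = g (\<pi> i) ^^ a i" .
qed

lemma main:
  assumes b: "b \<in> generate SG (\<Union>i\<in>{1..k}. {x \<in> normalizer SG (Gi i). x permutes \<Omega> i})"
    and \<kappa>: "\<kappa> \<in> generate SG (P ` {2..k})"
  shows "\<kappa> \<otimes>\<^bsub>SG\<^esub> b \<in> normalizer SG H \<longleftrightarrow>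
         \<kappa> \<otimes>\<^bsub>SG\<^esub> inv\<^bsub>SG\<^esub> b \<in> normalizer SG {x \<in> GG. \<gamma> x \<in> perp p k C}"
proof -
  obtain \<pi> where K: "PermG \<kappa> \<pi>" using K_gen[OF \<kappa>] by blast
  obtain a where B: "DiagG b a" using B_gen[OF b] by blast
  obtain a' where B': "DiagG (inv' b) a'" and aa: "\<forall>i\<in>{1..k}. [a' i * a i = 1] (mod p)"
    using DiagG_inv[OF B] by blast
  have kp: "\<kappa> permutes {1..n}" and \<pi>: "\<pi> permutes {1..k}" using K unfolding PermG_def by auto
  have bp: "b permutes {1..n}" and ca: "\<forall>i\<in>{1..k}. coprime (a i) p" using B unfolding DiagG_def by auto
  have bp': "inv' b permutes {1..n}" and ca': "\<forall>i\<in>{1..k}. coprime (a' i) p" using B' unfolding DiagG_def by auto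
  have binv: "inv\<^bsub>SG\<^esub> b = inv' b" using bp by (simp add: sym_group_carrier)
  have s1: "\<kappa> \<circ> b permutes {1..n}" using kp bp permutes_compose by blast
  have s2: "\<kappa> \<circ> inv' b permutes {1..n}" using kp bp' permutes_compose by blast
  have PV: "perp p k C \<subseteq> V" by (auto simp: perp_def)
  have "\<kappa> \<otimes>\<^bsub>SG\<^esub> b \<in> normalizer SG H \<longleftrightarrow> Mv p k \<pi> a ` C = C"
    unfolding sym_mult using norm_E[OF s1 \<pi> ca eq_comb[OF K B] C_V] H_eq by simp
  also have "\<dots> \<longleftrightarrow> Mv p k \<pi> a' ` perp p k C = perp p k C"
  proof (rule adj_perp[OF prime code_C])
    show "bij_betw (Mv p k \<pi> a) V V" by (rule Mv_bij[OF p0 \<pi> ca])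
    show "bij_betw (Mv p k \<pi> a') V V" by (rule Mv_bij[OF p0 \<pi> ca'])
    show "dot p k (Mv p k \<pi> a' u) (Mv p k \<pi> a v) = dot p k u v" for u v by (rule Mv_adj[OF \<pi> aa])
    show "Mv p k \<pi> a (vadd p u v) = vadd p (Mv p k \<pi> a u) (Mv p k \<pi> a v)" for u v by (rule Mv_add)
    show "Mv p k \<pi> a zv = zv" by (rule Mv_zv)
  qed
  also have "\<dots> \<longleftrightarrow> \<kappa> \<otimes>\<^bsub>SG\<^esub> inv\<^bsub>SG\<^esub> b \<in> normalizer SG {x \<in> GG. \<gamma> x \<in> perp p k C}"
    unfolding binv sym_mult Hperp_eq using norm_E[OF s2 \<pi> ca' eq_comb[OF K B'] PV] by simp
  finally show ?thesis .
qed

end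

theorem lemma4p1:
  fixes p n k :: nat and H :: "(nat \<Rightarrow> nat) set" and \<Omega> :: "nat \<Rightarrow> nat set"
    and \<phi> :: "nat \<Rightarrow> nat \<Rightarrow> nat" and g1 b \<kappa> :: "nat \<Rightarrow> nat"
  assumes "prime p"
    and "subgroup H (sym_group n)"
    and "n = p * k"
    and "\<And>i. i \<in> {1..k} \<Longrightarrow> card (\<Omega> i) = p"
    and "\<And>i j. i \<in> {1..k} \<Longrightarrow> j \<in> {1..k} \<Longrightarrow> i \<noteq> j \<Longrightarrow> \<Omega> i \<inter> \<Omega> j = {}"
    and "(\<Union>i\<in>{1..k}. \<Omega> i) = {1..n}"
    and "\<And>i x. i \<in> {1..k} \<Longrightarrow> x \<in> \<Omega> i \<Longrightarrow> (\<lambda>h. h x) ` H = \<Omega> i"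
    and "\<And>i. i \<in> {1..k} \<Longrightarrow> card (restr_grp H (\<Omega> i)) = p \<and>
              (\<exists>c. restr_grp H (\<Omega> i) = generate (sym_group n) {c})"
    and "restr_grp H (\<Omega> 1) = generate (sym_group n) {g1}"
    and "\<And>j. j \<in> {2..k} \<Longrightarrow>
           perm_iso_witness (\<phi> j) (\<Omega> 1) (\<Omega> j) (restr_grp H (\<Omega> 1)) (restr_grp H (\<Omega> j))"
    and "b \<in> generate (sym_group n)
           (\<Union>i\<in>{1..k}. {x \<in> normalizer (sym_group n) (restr_grp H (\<Omega> i)). x permutes \<Omega> i})"
    and "\<kappa> \<in> generate (sym_group n) ((\<lambda>j. phibar (\<Omega> 1) (\<Omega> j) (\<phi> j)) ` {2..k})"
  shows "\<kappa> \<otimes>\<^bsub>sym_group n\<^esub> b \<in> normalizer (sym_group n) H \<longleftrightarrow>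
         \<kappa> \<otimes>\<^bsub>sym_group n\<^esub> inv\<^bsub>sym_group n\<^esub> b \<in> normalizer (sym_group n)
           {x \<in> prod_grp n k \<Omega> (\<lambda>i. restr_grp H (\<Omega> i)).
              gamma (gens (\<Omega> 1) \<Omega> \<phi> g1) p k x
                \<in> perp p k (gamma (gens (\<Omega> 1) \<Omega> \<phi> g1) p k ` H)}"
  proof -
  interpret S p n k H \<Omega> \<phi> g1 by (rule S.intro[OF assms(1-10)])
  show ?thesis by (rule main[OF assms(11) assms(12)])
qed

end
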